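(* Let $(V,\eta)$ be a real vector space of dimension $n+2$, $n>1$, with a symmetric bilinear form $\eta$ of signature $(+,-,\dots,-)$, let $G=SO_0(\eta)$ and $\mathfrak g=so(\eta)$. Fix $\mathbf s,\mathbf t\in V$ with $\eta(\mathbf s,\mathbf s)=-1$, $\eta(\mathbf t,\mathbf t)=1$, $\eta(\mathbf s,\mathbf t)=0$, and put $\mathbf f:=\mathbf t-\mathbf s$. Let $\mathfrak a:=\{Y\in\mathfrak g: Y\mathbf s=0\}$, $\mathfrak c:=\mathrm{span}\{\Lambda_{x\mathbf f}: x\in\mathbf s^\perp\}$, $A:=\{g\in G: g\mathbf s=\pm\mathbf s\}$, and let $\mathfrak a^0\subset\mathfrak g^*$ be the annihilator of $\mathfrak a$. Let $\{\cdot,\cdot\}$ be the Poisson bracket on $\mathfrak a^0\times A$ described in the context (the one dual to the Lie algebroid with sections $X_p^L$, $p\in\mathfrak c$). For $\varphi,\psi\in\mathfrak a^0$ define functions on $\mathfrak a^0\times A$ by $\tilde k_\varphi(\chi,a):=\tilde k(\varphi,\chi)$ and $\tilde k_{\varphi\psi}(\chi,a):=\tilde k(\varphi,\mathrm{ad}^\#(a)\psi)$, and put $\theta:=k(\Lambda_{\mathbf t\mathbf s})\in\mathfrak a^0$. Then for all $\varphi,\psi,\lambda,\mu\in\mathfrak a^0$: $$\{\tilde k_\varphi,\tilde k_\psi\}=\tilde k(\theta,\varphi)\tilde k_\psi-\tilde k(\theta,\psi)\tilde k_\varphi,$$ $$\{\tilde k_\lambda,\tilde k_{\varphi\psi}\}=\tilde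 k_{\lambda\psi}\big(\tilde k_{\varphi\theta}-\tilde k(\theta,\varphi)\big)+\tilde k(\lambda,\varphi)\big(\tilde k_{\theta\psi}-\tilde k(\theta,\psi)\big),$$ $$\{\tilde k_{\varphi\lambda},\tilde k_{\psi\mu}\}=0,$$ where the scalars $\tilde k(\theta,\varphi)$ etc. denote constant functions.
   Context: For $x,y\in V$, $\Lambda_{xy}\in so(\eta)$ is the operator $\Lambda_{xy}(z)=\eta(y,z)x-\eta(x,z)y$; $so(\eta)$ is spanned by these. $k$ is the nondegenerate bilinear form on $\mathfrak g$ with $k(\Lambda_{xy},\Lambda_{zt})=\eta(x,t)\eta(y,z)-\eta(x,z)\eta(y,t)$; also $k$ denotes the induced isomorphism $\mathfrak g\to\mathfrak g^*$, $\langle k(X),Y\rangle=k(X,Y)$, and $\tilde k(\varphi,\psi):=k(k^{-1}\varphi,k^{-1}\psi)$ on $\mathfrak g^*$. $\mathrm{ad}(g)X=gXg^{-1}$ and $\mathrm{ad}^\#(g)=\mathrm{ad}(g^{-1})^*$ (coadjoint action), so $\mathrm{ad}^\#(g)k(X)=k(\mathrm{ad}(g)X)$. One has $\mathfrak g=\mathfrak c\oplus\mathfrak a$ (direct sum of vector spaces); $P_{\mathfrak a}$ denotes the projection onto $\mathfrak a$ along $\mathfrak c$. For $p\in\mathfrak c$ define the function $\widetilde{X^L_p}(\varphi,a):=\langle\varphi,\mathrm{ad}(a)p\rangle$ on $\mathfrak a^0\times A$ and the vector field $\Pi^L(X^L_p)$ on $A$ by $\Pi^L(X^L_p)(a):=\frac{d}{dt}\big|_{t=0}\exp\big(tP_{\mathfrak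 a}(\mathrm{ad}(a)p)\big)a$. The Poisson bracket $\{\cdot,\cdot\}$ on $\mathfrak a^0\times A$ (which is $(TA)^0\subset T^*G$ identified via right translations) is the one satisfying, for $p,q\in\mathfrak c$ and smooth $f_1,f_2$ on $A$, with $\pi:\mathfrak a^0\times A\to A$ the projection: $\{\widetilde{X^L_p},\widetilde{X^L_q}\}=\widetilde{X^L_{[p,q]}}$, $\{\widetilde{X^L_p},\pi^*f_1\}=\pi^*(\Pi^L(X^L_p)f_1)$, $\{\pi^*f_1,\pi^*f_2\}=0$ (this is the linear Poisson structure dual to the Lie algebroid of the groupoid $AC\cap CA\rightrightarrows A$, $C$ being the connected subgroup with Lie algebra $\mathfrak c$). *)

theory Defs
  imports "HOL-Analysis.Analysis"
begin

type_synonym 'n mat = "real^'n^'n"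
type_synonym 'n dual = "'n mat \<Rightarrow> real"
type_synonym 'n pt = "'n dual \<times> 'n mat"

definition lorentz_form :: "(real^'n::finite \<Rightarrow> real^'n \<Rightarrow> real) \<Rightarrow> bool" where
  "lorentz_form eta \<longleftrightarrow> bilinear eta \<and> (\<forall>x y. eta x y = eta y x) \<and>
     (\<exists>(b :: 'n \<Rightarrow> real^'n) i0. \<forall>i j. eta (b i) (b j) =
        (if i = j then (if i = i0 then 1 else -1) else 0))"

definition Lam :: "(real^'n::finite \<Rightarrow> real^'n \<Rightarrow> real) \<Rightarrow> real^'n \<Rightarrow> real^'n \<Rightarrow> 'n mat" where
  "Lam eta x y = matrix (\<lambda>z. eta y z *\<^sub>R x - eta x z *\<^sub>R y)"

definition so_alg :: "(real^'n::finite \<Rightarrow> real^'n \<Rightarrow> real) \<Rightarrow> 'n mat set" where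
  "so_alg eta = {X. \<forall>x y. eta (X *v x) y + eta x (X *v y) = 0}"

definition O_grp :: "(real^'n::finite \<Rightarrow> real^'n \<Rightarrow> real) \<Rightarrow> 'n mat set" where
  "O_grp eta = {g. \<forall>x y. eta (g *v x) (g *v y) = eta x y}"

definition SO0 :: "(real^'n::finite \<Rightarrow> real^'n \<Rightarrow> real) \<Rightarrow> 'n mat set" where
  "SO0 eta = connected_component_set (O_grp eta) (mat 1)"

definition lie_br :: "('n::finite) mat \<Rightarrow> 'n mat \<Rightarrow> 'n mat" where
  "lie_br X Y = X ** Y - Y ** X"

definition ad :: "('n::finite) mat \<Rightarrow> 'n mat \<Rightarrow> 'n mat" where
  "ad g X = g ** X ** matrix_inv g"

definition mpow :: "('n::finite) mat \<Rightarrow> nat \<Rightarrow> 'n mat" where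
  "mpow X m = (((**) X) ^^ m) (mat 1)"

definition mexp :: "('n::finite) mat \<Rightarrow> 'n mat" where
  "mexp X = (\<Sum>m. (1 / fact m) *\<^sub>R mpow X m)"

definition kform :: "(real^'n::finite \<Rightarrow> real^'n \<Rightarrow> real) \<Rightarrow> 'n mat \<Rightarrow> 'n mat \<Rightarrow> real" where
  "kform eta = (SOME B. bilinear B \<and> (\<forall>x y z t.
      B (Lam eta x y) (Lam eta z t) = eta x t * eta y z - eta x z * eta y t))"

text \<open>g^* : linear functionals on g, encoded canonically as functions vanishing off g.\<close>
definition gdual :: "(real^'n::finite \<Rightarrow> real^'n \<Rightarrow> real) \<Rightarrow> 'n dual set" where
  "gdual eta = {phi. (\<forall>X\<in>so_alg eta. \<forall>Y\<in>so_alg eta. phi (X + Y) = phi X + phi Y) \<and>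
      (\<forall>c. \<forall>X\<in>so_alg eta. phi (c *\<^sub>R X) = c * phi X) \<and>
      (\<forall>X. X \<notin> so_alg eta \<longrightarrow> phi X = 0)}"

definition kdual :: "(real^'n::finite \<Rightarrow> real^'n \<Rightarrow> real) \<Rightarrow> 'n mat \<Rightarrow> 'n dual" where
  "kdual eta X = (\<lambda>Y. if Y \<in> so_alg eta then kform eta X Y else 0)"

definition kinv :: "(real^'n::finite \<Rightarrow> real^'n \<Rightarrow> real) \<Rightarrow> 'n dual \<Rightarrow> 'n mat" where
  "kinv eta phi = (THE X. X \<in> so_alg eta \<and> kdual eta X = phi)"

definition ktil :: "(real^'n::finite \<Rightarrow> real^'n \<Rightarrow> real) \<Rightarrow> 'n dual \<Rightarrow> 'n dual \<Rightarrow> real" where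
  "ktil eta phi psi = kform eta (kinv eta phi) (kinv eta psi)"

definition adsharp :: "(real^'n::finite \<Rightarrow> real^'n \<Rightarrow> real) \<Rightarrow> 'n mat \<Rightarrow> 'n dual \<Rightarrow> 'n dual" where
  "adsharp eta g phi = (\<lambda>Y. if Y \<in> so_alg eta then phi (ad (matrix_inv g) Y) else 0)"

definition a_alg :: "(real^'n::finite \<Rightarrow> real^'n \<Rightarrow> real) \<Rightarrow> real^'n \<Rightarrow> 'n mat set" where
  "a_alg eta s = {Y \<in> so_alg eta. Y *v s = 0}"

definition c_alg :: "(real^'n::finite \<Rightarrow> real^'n \<Rightarrow> real) \<Rightarrow> real^'n \<Rightarrow> real^'n \<Rightarrow> 'n mat set" where
  "c_alg eta s t = span {Lam eta x (t - s) | x. eta s x = 0}"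

definition A_grp :: "(real^'n::finite \<Rightarrow> real^'n \<Rightarrow> real) \<Rightarrow> real^'n \<Rightarrow> 'n mat set" where
  "A_grp eta s = {g \<in> SO0 eta. g *v s = s \<or> g *v s = - s}"

definition ann :: "(real^'n::finite \<Rightarrow> real^'n \<Rightarrow> real) \<Rightarrow> real^'n \<Rightarrow> 'n dual set" where
  "ann eta s = {phi \<in> gdual eta. \<forall>Y \<in> a_alg eta s. phi Y = 0}"

definition Pa :: "(real^'n::finite \<Rightarrow> real^'n \<Rightarrow> real) \<Rightarrow> real^'n \<Rightarrow> real^'n \<Rightarrow> 'n mat \<Rightarrow> 'n mat" where
  "Pa eta s t X = (THE Y. Y \<in> a_alg eta s \<and> X - Y \<in> c_alg eta s t)"

definition Dom :: "(real^'n::finite \<Rightarrow> real^'n \<Rightarrow> real) \<Rightarrow> real^'n \<Rightarrow> 'n pt set" where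
  "Dom eta s = ann eta s \<times> A_grp eta s"

fun iter_dd :: "'v::real_normed_vector list \<Rightarrow> ('v \<Rightarrow> real) \<Rightarrow> 'v \<Rightarrow> real" where
  "iter_dd [] G = G"
| "iter_dd (v # vs) G = (\<lambda>x. frechet_derivative (iter_dd vs G) (at x) v)"

definition smooth_on :: "'v::real_normed_vector set \<Rightarrow> ('v \<Rightarrow> real) \<Rightarrow> bool" where
  "smooth_on U G \<longleftrightarrow> open U \<and> (\<forall>vs. iter_dd vs G differentiable_on U)"

definition smooth_A :: "(real^'n::finite \<Rightarrow> real^'n \<Rightarrow> real) \<Rightarrow> real^'n \<Rightarrow> ('n mat \<Rightarrow> real) \<Rightarrow> bool" where
  "smooth_A eta s f \<longleftrightarrow> (\<exists>U g. smooth_on U g \<and> A_grp eta s \<subseteq> U \<and> (\<forall>a \<in> A_grp eta s. f a = g a))"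

text \<open>smooth functions on a^0 x A (a^0 embedded in g via k^-1), encoded as vanishing off the domain\<close>
definition smooth_D :: "(real^'n::finite \<Rightarrow> real^'n \<Rightarrow> real) \<Rightarrow> real^'n \<Rightarrow> ('n pt \<Rightarrow> real) \<Rightarrow> bool" where
  "smooth_D eta s F \<longleftrightarrow>
     (\<exists>U (G :: 'n mat \<times> 'n mat \<Rightarrow> real). smooth_on U G \<and>
        (\<forall>(chi, a) \<in> Dom eta s. (kinv eta chi, a) \<in> U \<and> F (chi, a) = G (kinv eta chi, a))) \<and>
     (\<forall>z. z \<notin> Dom eta s \<longrightarrow> F z = 0)"

definition XL :: "(real^'n::finite \<Rightarrow> real^'n \<Rightarrow> real) \<Rightarrow> real^'n \<Rightarrow> 'n mat \<Rightarrow> 'n pt \<Rightarrow> real" where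
  "XL eta s p = (\<lambda>(chi, a). if (chi, a) \<in> Dom eta s then chi (ad a p) else 0)"

definition pull :: "(real^'n::finite \<Rightarrow> real^'n \<Rightarrow> real) \<Rightarrow> real^'n \<Rightarrow> ('n mat \<Rightarrow> real) \<Rightarrow> 'n pt \<Rightarrow> real" where
  "pull eta s f = (\<lambda>(chi, a). if (chi, a) \<in> Dom eta s then f a else 0)"

definition PiL :: "(real^'n::finite \<Rightarrow> real^'n \<Rightarrow> real) \<Rightarrow> real^'n \<Rightarrow> real^'n \<Rightarrow> 'n mat \<Rightarrow> ('n mat \<Rightarrow> real) \<Rightarrow> 'n mat \<Rightarrow> real" where
  "PiL eta s t p f a = deriv (\<lambda>\<tau>. f (mexp (\<tau> *\<^sub>R Pa eta s t (ad a p)) ** a)) 0"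

text \<open>The defining properties of the Poisson bracket on a^0 x A (values on the domain only).\<close>
definition is_poisson_bracket :: "(real^'n::finite \<Rightarrow> real^'n \<Rightarrow> real) \<Rightarrow> real^'n \<Rightarrow> real^'n \<Rightarrow>
    (('n pt \<Rightarrow> real) \<Rightarrow> ('n pt \<Rightarrow> real) \<Rightarrow> 'n pt \<Rightarrow> real) \<Rightarrow> bool" where
  "is_poisson_bracket eta s t br \<longleftrightarrow>
    (\<forall>F G H z. smooth_D eta s F \<and> smooth_D eta s G \<and> smooth_D eta s H \<and> z \<in> Dom eta s \<longrightarrow>
        br (\<lambda>w. F w + G w) H z = br F H z + br G H z \<and>
        br F G z = - br G F z \<and>
        br F (\<lambda>w. G w * H w) z = br F G z * H z + G z * br F H z) \<and>
    (\<forall>F G c z. smooth_D eta s F \<and> smooth_D eta s G \<and> z \<in> Dom eta s \<longrightarrow>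
        br (\<lambda>w. c * F w) G z = c * br F G z) \<and>
    (\<forall>p q z. p \<in> c_alg eta s t \<and> q \<in> c_alg eta s t \<and> z \<in> Dom eta s \<longrightarrow>
        br (XL eta s p) (XL eta s q) z = XL eta s (lie_br p q) z) \<and>
    (\<forall>p f z. p \<in> c_alg eta s t \<and> smooth_A eta s f \<and> z \<in> Dom eta s \<longrightarrow>
        br (XL eta s p) (pull eta s f) z = pull eta s (PiL eta s t p f) z) \<and>
    (\<forall>f1 f2 z. smooth_A eta s f1 \<and> smooth_A eta s f2 \<and> z \<in> Dom eta s \<longrightarrow>
        br (pull eta s f1) (pull eta s f2) z = 0)"

definition kt1 :: "(real^'n::finite \<Rightarrow> real^'n \<Rightarrow> real) \<Rightarrow> real^'n \<Rightarrow> 'n dual \<Rightarrow> 'n pt \<Rightarrow> real" where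
  "kt1 eta s phi = (\<lambda>(chi, a). if (chi, a) \<in> Dom eta s then ktil eta phi chi else 0)"

definition kt2 :: "(real^'n::finite \<Rightarrow> real^'n \<Rightarrow> real) \<Rightarrow> real^'n \<Rightarrow> 'n dual \<Rightarrow> 'n dual \<Rightarrow> 'n pt \<Rightarrow> real" where
  "kt2 eta s phi psi = (\<lambda>(chi, a). if (chi, a) \<in> Dom eta s then ktil eta phi (adsharp eta a psi) else 0)"

end

theory Submission
  imports Defs
begin


locale lor =
  fixes eta :: "real^'n::finite \<Rightarrow> real^'n \<Rightarrow> real" and b :: "'n \<Rightarrow> real^'n"
  assumes bil: "bilinear eta" and esym: "\<And>x y. eta x y = eta y x"
    and orth: "\<And>i j. i \<noteq> j \<Longrightarrow> eta (b i) (b j) = 0"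
    and epsq: "\<And>i. eta (b i) (b i) = 1 \<or> eta (b i) (b i) = -1"
begin

definition eps where "eps i = eta (b i) (b i)"

lemma eps_sq[simp]: "eps i * eps i = 1" using epsq[of i] unfolding eps_def by auto

lemma lin_r: "linear (eta x)" using bil by (simp add: bilinear_def)
lemma lin_l: "linear (\<lambda>x. eta x y)" using bil by (simp add: bilinear_def)

lemma eta_add_r[simp]: "eta x (y + z) = eta x y + eta x z" using lin_r[of x] by (simp add: linear_add)
lemma eta_add_l[simp]: "eta (y + z) x = eta y x + eta z x" using linear_add[OF lin_l[of x]] by simp
lemma eta_scale_r[simp]: "eta x (c *\<^sub>R y) = c * eta x y" using lin_r[of x] by (simp add: linear_scale)
lemma eta_scale_l[simp]: "eta (c *\<^sub>R y) x = c * eta y x" using linear_scale[OF lin_l[of x]] by simp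
lemma eta_diff_r[simp]: "eta x (y - z) = eta x y - eta x z" using lin_r[of x] by (simp add: linear_diff)
lemma eta_diff_l[simp]: "eta (y - z) x = eta y x - eta z x" using linear_diff[OF lin_l[of x]] by simp
lemma eta_minus_r[simp]: "eta x (- y) = - eta x y" using lin_r[of x] by (simp add: linear_neg)
lemma eta_minus_l[simp]: "eta (- y) x = - eta y x" using linear_neg[OF lin_l[of x]] by simp
lemma eta_0_r[simp]: "eta x 0 = 0" using lin_r[of x] by (simp add: linear_0)
lemma eta_0_l[simp]: "eta 0 x = 0" using linear_0[OF lin_l[of x]] by simp
lemma eta_sum_r: "eta x (\<Sum>i\<in>S. f i) = (\<Sum>i\<in>S. eta x (f i))" using lin_r[of x] by (simp add: linear_sum)
lemma eta_sum_l: "eta (\<Sum>i\<in>S. f i) x = (\<Sum>i\<in>S. eta (f i) x)" using linear_sum[OF lin_l[of x]] by simp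

lemma eta_bb: "eta (b k) (b j) = (if k = j then eps k else 0)"
  using orth eps_def by auto

lemma expand: "z = (\<Sum>j\<in>UNIV. (eps j * eta (b j) z) *\<^sub>R b j)"
proof -
  define L where "L = (\<lambda>c::real^'n. \<Sum>j\<in>UNIV. c$j *\<^sub>R b j)"
  have lin: "linear L" unfolding L_def
    by (rule linearI) (simp_all add: sum.distrib scaleR_add_left scaleR_sum_right algebra_simps)
  have etaL: "eta (b k) (L c) = c$k * eps k" for k c
    unfolding L_def eta_sum_r by (simp add: eta_bb if_distrib sum.delta cong: if_cong)
  have z0: "c = 0" if "L c = 0" for c
  proof -
    have "c$k = 0" for k
    proof -
      have "c$k * eps k = 0" using etaL[of k c] that by simp
      moreover have "eps k \<noteq> 0" using eps_sq[of k] by (metis mult_zero_left zero_neq_one)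
      ultimately show ?thesis by simp
    qed
    then show "c = 0" by (simp add: vec_eq_iff)
  qed
  have "inj L"
  proof (rule injI)
    fix x y assume "L x = L y"
    then have "L (x - y) = 0" using linear_diff[OF lin] by simp
    then show "x = y" using z0[of "x - y"] by simp
  qed
  then have "surj L" by (rule linear_inj_imp_surj[OF lin])
  then obtain c where c: "z = L c" by (metis surj_def)
  have cj: "c$j = eps j * eta (b j) z" for j
  proof -
    have "eps j * eta (b j) z = c$j * (eps j * eps j)" using etaL[of j c] c by (simp add: mult_ac)
    then show ?thesis by simp
  qed
  show ?thesis using c unfolding L_def cj by simp
qed

lemma nondeg: "(\<And>y. eta y v = 0) \<Longrightarrow> v = 0"
  by (subst expand) simp

lemma nondeg_eq: "(\<And>y. eta y v = eta y w) \<Longrightarrow> v = w"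
  using nondeg[of "v - w"] by simp

end


lemma scale_mv[simp]: fixes A :: "real^'n^'m" shows "(c *\<^sub>R A) *v x = c *\<^sub>R (A *v x)"
  by (simp add: vec_eq_iff matrix_vector_mult_def sum_distrib_left mult_ac)
lemma neg_mv[simp]: fixes A :: "real^'n^'m" shows "(- A) *v x = - (A *v x)"
  by (simp add: vec_eq_iff matrix_vector_mult_def sum_negf)
lemma add_mv[simp]: fixes A :: "real^'n^'m" shows "(A + B) *v x = A *v x + B *v x"
  by (simp add: matrix_vector_mult_add_rdistrib)
lemma diff_mv[simp]: fixes A :: "real^'n^'m" shows "(A - B) *v x = A *v x - B *v x"
  by (simp add: matrix_vector_mult_diff_rdistrib)
lemma mv_scale[simp]: fixes A :: "real^'n^'m" shows "A *v (c *\<^sub>R x) = c *\<^sub>R (A *v x)"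
  by (simp add: vec_eq_iff matrix_vector_mult_def sum_distrib_left mult_ac)
lemma mv_add[simp]: fixes A :: "real^'n^'m" shows "A *v (x + y) = A *v x + A *v y"
  by (simp add: vec_eq_iff matrix_vector_mult_def sum.distrib algebra_simps)
lemma mv_diff[simp]: fixes A :: "real^'n^'m" shows "A *v (x - y) = A *v x - A *v y"
  by (simp add: vec_eq_iff matrix_vector_mult_def sum_subtractf algebra_simps)
lemma mv_neg[simp]: fixes A :: "real^'n^'m" shows "A *v (- y) = - (A *v y)"
  by (simp add: vec_eq_iff matrix_vector_mult_def sum_negf)
lemma mm_mv[simp]: fixes A :: "real^'n^'m" shows "(A ** B) *v x = A *v (B *v x)"
  by (simp add: matrix_vector_mul_assoc)

context lor begin

lemma mat_works_real: "linear (f::real^'n \<Rightarrow> real^'n) \<Longrightarrow> matrix f *v x = f x"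
  by (rule matrix_works) (simp add: linear_matrix_vector_mul_eq)

lemma Lam_apply: "Lam eta x y *v z = eta y z *\<^sub>R x - eta x z *\<^sub>R y"
proof -
  have "linear (\<lambda>z. eta y z *\<^sub>R x - eta x z *\<^sub>R y)"
    by (rule linearI) (simp_all add: algebra_simps)
  then show ?thesis unfolding Lam_def by (rule mat_works_real)
qed

lemma mat_eqI: "(\<And>x. A *v x = B *v x) \<Longrightarrow> A = (B::real^'n^'n)"
  using matrix_eq by blast

lemma so_def2: "X \<in> so_alg eta \<longleftrightarrow> (\<forall>x y. eta (X *v x) y + eta x (X *v y) = 0)"
  by (simp add: so_alg_def)

lemma soD: "X \<in> so_alg eta \<Longrightarrow> eta (X *v x) y = - eta x (X *v y)"
  unfolding so_def2 by (simp add: eq_neg_iff_add_eq_0)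

lemma soI: "(\<And>x y. eta (X *v x) y = - eta x (X *v y)) \<Longrightarrow> X \<in> so_alg eta"
  unfolding so_def2 by simp

lemma so_self: "X \<in> so_alg eta \<Longrightarrow> eta (X *v x) x = 0"
  using soD[of X x x] esym[of "X *v x" x] by simp

lemma Lam_so: "Lam eta x y \<in> so_alg eta"
  by (rule soI) (simp add: Lam_apply algebra_simps esym)

lemma so_add: "X \<in> so_alg eta \<Longrightarrow> Y \<in> so_alg eta \<Longrightarrow> X + Y \<in> so_alg eta"
  by (rule soI) (simp add: matrix_vector_mult_add_rdistrib soD)
lemma so_diff: "X \<in> so_alg eta \<Longrightarrow> Y \<in> so_alg eta \<Longrightarrow> X - Y \<in> so_alg eta"
  by (rule soI) (simp add: matrix_vector_mult_diff_rdistrib soD)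
lemma so_scale: "X \<in> so_alg eta \<Longrightarrow> c *\<^sub>R X \<in> so_alg eta"
  by (rule soI) (simp add: matrix_scaleR_vector_ac soD)
lemma so_0: "0 \<in> so_alg eta"
  by (rule soI) simp
lemma so_sum: "finite S \<Longrightarrow> (\<And>i. i \<in> S \<Longrightarrow> X i \<in> so_alg eta) \<Longrightarrow> (\<Sum>i\<in>S. X i) \<in> so_alg eta"
  by (induction S rule: finite_induct) (auto intro: so_add so_0)

lemma sum_mv: "(\<Sum>i\<in>S. X i) *v x = (\<Sum>i\<in>S. X i *v x)"
  by (induction S rule: infinite_finite_induct) (auto simp: matrix_vector_mult_add_rdistrib)

lemma Lam_add_l: "Lam eta (x + x') y = Lam eta x y + Lam eta x' y"
  by (rule mat_eqI) (simp add: Lam_apply matrix_vector_mult_add_rdistrib algebra_simps)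
lemma Lam_add_r: "Lam eta x (y + y') = Lam eta x y + Lam eta x y'"
  by (rule mat_eqI) (simp add: Lam_apply matrix_vector_mult_add_rdistrib algebra_simps)
lemma Lam_diff_l: "Lam eta (x - x') y = Lam eta x y - Lam eta x' y"
  by (rule mat_eqI) (simp add: Lam_apply matrix_vector_mult_diff_rdistrib algebra_simps)
lemma Lam_diff_r: "Lam eta x (y - y') = Lam eta x y - Lam eta x y'"
  by (rule mat_eqI) (simp add: Lam_apply matrix_vector_mult_diff_rdistrib algebra_simps)
lemma Lam_scale_l: "Lam eta (c *\<^sub>R x) y = c *\<^sub>R Lam eta x y"
  by (rule mat_eqI) (simp add: Lam_apply matrix_scaleR_vector_ac algebra_simps)
lemma Lam_scale_r: "Lam eta x (c *\<^sub>R y) = c *\<^sub>R Lam eta x y"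
  by (rule mat_eqI) (simp add: Lam_apply matrix_scaleR_vector_ac algebra_simps)
lemma Lam_0_l: "Lam eta 0 y = 0"
  by (rule mat_eqI) (simp add: Lam_apply)
lemma Lam_0_r: "Lam eta x 0 = 0"
  by (rule mat_eqI) (simp add: Lam_apply)
lemma Lam_swap: "Lam eta y x = - Lam eta x y"
  by (rule mat_eqI) (simp add: Lam_apply)
lemma Lam_sum_l: "Lam eta (\<Sum>i\<in>S. x i) y = (\<Sum>i\<in>S. Lam eta (x i) y)"
  by (induction S rule: infinite_finite_induct) (auto simp: Lam_add_l Lam_0_l)

definition adj :: "'n mat \<Rightarrow> 'n mat" where
  "adj a = matrix (\<lambda>x. \<Sum>j\<in>UNIV. (eps j * eta (a *v b j) x) *\<^sub>R b j)"

lemma adj_apply: "adj a *v x = (\<Sum>j\<in>UNIV. (eps j * eta (a *v b j) x) *\<^sub>R b j)"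
proof -
  have "linear (\<lambda>x. \<Sum>j\<in>UNIV. (eps j * eta (a *v b j) x) *\<^sub>R b j)"
    by (rule linearI) (simp_all add: algebra_simps sum.distrib scaleR_sum_right)
  then show ?thesis unfolding adj_def by (rule mat_works_real)
qed

lemma adj_eq: "eta (adj a *v x) y = eta x (a *v y)"
proof -
  have "eta (adj a *v x) y = (\<Sum>j\<in>UNIV. eps j * eta (a *v b j) x * eta (b j) y)"
    by (simp add: adj_apply eta_sum_l)
  also have "\<dots> = eta (a *v (\<Sum>j\<in>UNIV. (eps j * eta (b j) y) *\<^sub>R b j)) x"
    by (simp add: linear_sum[OF matrix_vector_mul_linear] matrix_vector_mult_scaleR eta_sum_l mult_ac)
  also have "\<dots> = eta (a *v y) x" using expand[of y, symmetric] by simp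
  finally show ?thesis by (simp add: esym)
qed

lemma adj_eq2: "eta x (adj a *v y) = eta (a *v x) y"
  using adj_eq[of a y x] esym by simp

lemma adj_unique: assumes "\<And>x y. eta (M *v x) y = eta x (a *v y)" shows "M = adj a"
proof (rule mat_eqI, rule nondeg_eq)
  fix x y show "eta y (M *v x) = eta y (adj a *v x)"
    using assms[of x y] adj_eq[of a x y] esym by simp
qed

lemma adj_add: "adj (A + B) = adj A + adj B"
  by (rule adj_unique[symmetric]) (simp add: matrix_vector_mult_add_rdistrib adj_eq)
lemma adj_diff: "adj (A - B) = adj A - adj B"
  by (rule adj_unique[symmetric]) (simp add: matrix_vector_mult_diff_rdistrib adj_eq)
lemma adj_scale: "adj (c *\<^sub>R A) = c *\<^sub>R adj A"
  by (rule adj_unique[symmetric]) (simp add: matrix_scaleR_vector_ac adj_eq)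
lemma adj_mul: "adj (A ** B) = adj B ** adj A"
  by (rule adj_unique[symmetric]) (simp add: matrix_vector_mul_assoc[symmetric] adj_eq)
lemma adj_so: "X \<in> so_alg eta \<Longrightarrow> adj X = - X"
  by (rule adj_unique[symmetric]) (simp add: soD adj_eq)
lemma linear_adj: "linear adj"
  by (rule linearI) (simp_all add: adj_add adj_scale)

lemma O_def2: "g \<in> O_grp eta \<longleftrightarrow> (\<forall>x y. eta (g *v x) (g *v y) = eta x y)"
  by (simp add: O_grp_def)

lemma O_adj_l: "g \<in> O_grp eta \<Longrightarrow> adj g ** g = mat 1"
  by (rule mat_eqI, rule nondeg_eq) (simp add: matrix_vector_mul_assoc[symmetric] esym adj_eq2 O_def2)
lemma O_adj_r: "g \<in> O_grp eta \<Longrightarrow> g ** adj g = mat 1"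
  using O_adj_l matrix_left_right_inverse by blast
lemma O_inv: "g \<in> O_grp eta \<Longrightarrow> matrix_inv g = adj g"
proof -
  assume g: "g \<in> O_grp eta"
  have ex: "\<exists>A'. g ** A' = mat 1 \<and> A' ** g = mat 1" using O_adj_l[OF g] O_adj_r[OF g] by blast
  have mi: "g ** matrix_inv g = mat 1" unfolding matrix_inv_def using someI_ex[OF ex] by blast
  have "adj g = adj g ** (g ** matrix_inv g)" using mi by simp
  also have "\<dots> = matrix_inv g" by (simp add: matrix_mul_assoc O_adj_l[OF g])
  finally show ?thesis by simp
qed
lemma O_adj_apply: "g \<in> O_grp eta \<Longrightarrow> adj g *v (g *v x) = x"
  by (simp add: matrix_vector_mul_assoc O_adj_l)
lemma O_adj_apply2: "g \<in> O_grp eta \<Longrightarrow> g *v (adj g *v x) = x"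
  by (simp add: matrix_vector_mul_assoc O_adj_r)
lemma O_adj_O: "g \<in> O_grp eta \<Longrightarrow> adj g \<in> O_grp eta"
  unfolding O_def2 by (metis O_adj_apply2 O_def2)

lemma ad_O: "g \<in> O_grp eta \<Longrightarrow> ad g X = g ** X ** adj g"
  by (simp add: ad_def O_inv)

lemma ad_Lam: "g \<in> O_grp eta \<Longrightarrow> ad g (Lam eta x y) = Lam eta (g *v x) (g *v y)"
  apply (rule mat_eqI)
  apply (simp add: ad_O matrix_vector_mul_assoc[symmetric] Lam_apply matrix_vector_mult_diff_distrib
      matrix_vector_mult_scaleR adj_eq2)
  done

lemma ad_so: assumes "g \<in> O_grp eta" "X \<in> so_alg eta" shows "ad g X \<in> so_alg eta"
proof (rule soI)
  fix x y
  have "eta (ad g X *v x) y = eta (X *v (adj g *v x)) (adj g *v y)"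
    using adj_eq2[of "X *v (adj g *v x)" g y] by (simp add: ad_O[OF assms(1)])
  also have "\<dots> = - eta (adj g *v x) (X *v (adj g *v y))" using soD[OF assms(2)] by simp
  also have "\<dots> = - eta x (ad g X *v y)" by (simp add: adj_eq ad_O[OF assms(1)])
  finally show "eta (ad g X *v x) y = - eta x (ad g X *v y)" .
qed

end


context lor begin

lemma contr: "linear f \<Longrightarrow> (\<Sum>j\<in>UNIV. (eps j * eta (b j) u) * f (b j)) = (f u :: real)"
proof -
  assume lf: "linear f"
  have "f u = f (\<Sum>j\<in>UNIV. (eps j * eta (b j) u) *\<^sub>R b j)" using expand[of u] by simp
  also have "\<dots> = (\<Sum>j\<in>UNIV. (eps j * eta (b j) u) * f (b j))"
    by (simp add: linear_sum[OF lf] linear_scale[OF lf])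
  finally show ?thesis by simp
qed

lemma lin_eta_M: "linear (\<lambda>w. eta v (M *v w))"
  by (rule linearI) simp_all
lemma lin_eta_M2: "linear (\<lambda>w. eta (M *v w) v)"
  by (rule linearI) simp_all

definition B0 :: "'n mat \<Rightarrow> 'n mat \<Rightarrow> real" where
  "B0 X Y = (1/2) * (\<Sum>j\<in>UNIV. eps j * eta (b j) (X *v (Y *v b j)))"

lemma B0_bil: "bilinear B0"
  unfolding bilinear_def B0_def
  by (auto intro!: linearI simp: sum.distrib algebra_simps sum_distrib_left add_divide_distrib)

lemma B0_Lam_l: "B0 (Lam eta x y) Y = (1/2) * (eta y (Y *v x) - eta x (Y *v y))"
proof -
  have "B0 (Lam eta x y) Y = (1/2) * ((\<Sum>j\<in>UNIV. (eps j * eta (b j) x) * eta y (Y *v b j))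
       - (\<Sum>j\<in>UNIV. (eps j * eta (b j) y) * eta x (Y *v b j)))"
    unfolding B0_def by (simp add: Lam_apply algebra_simps sum_subtractf esym)
  also have "\<dots> = (1/2) * (eta y (Y *v x) - eta x (Y *v y))"
    by (simp add: contr[OF lin_eta_M])
  finally show ?thesis .
qed

lemma kform_ex: "\<exists>B. bilinear B \<and> (\<forall>x y z t.
      B (Lam eta x y) (Lam eta z t) = eta x t * eta y z - eta x z * eta y t)"
proof (intro exI conjI allI)
  show "bilinear B0" by (rule B0_bil)
  fix x y z t
  show "B0 (Lam eta x y) (Lam eta z t) = eta x t * eta y z - eta x z * eta y t"
    by (simp add: B0_Lam_l Lam_apply algebra_simps esym)
qed

lemma kform_prop: "bilinear (kform eta) \<and> (\<forall>x y z t.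
      kform eta (Lam eta x y) (Lam eta z t) = eta x t * eta y z - eta x z * eta y t)"
  unfolding kform_def by (rule someI_ex[OF kform_ex])

lemma k_bil: "bilinear (kform eta)" using kform_prop by blast
lemma k_LL: "kform eta (Lam eta x y) (Lam eta z t) = eta x t * eta y z - eta x z * eta y t"
  using kform_prop by blast

lemma k_lin_r: "linear (kform eta X)" using k_bil by (simp add: bilinear_def)
lemma k_lin_l: "linear (\<lambda>X. kform eta X Y)" using k_bil by (simp add: bilinear_def)

lemma k_add_r[simp]: "kform eta X (Y + Z) = kform eta X Y + kform eta X Z" using linear_add[OF k_lin_r] by simp
lemma k_add_l[simp]: "kform eta (Y + Z) X = kform eta Y X + kform eta Z X" using linear_add[OF k_lin_l] by simp
lemma k_diff_r[simp]: "kform eta X (Y - Z) = kform eta X Y - kform eta X Z" using linear_diff[OF k_lin_r] by simp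
lemma k_diff_l[simp]: "kform eta (Y - Z) X = kform eta Y X - kform eta Z X" using linear_diff[OF k_lin_l] by simp
lemma k_scale_r[simp]: "kform eta X (c *\<^sub>R Y) = c * kform eta X Y" using linear_scale[OF k_lin_r] by simp
lemma k_scale_l[simp]: "kform eta (c *\<^sub>R Y) X = c * kform eta Y X" using linear_scale[OF k_lin_l] by simp
lemma k_neg_r[simp]: "kform eta X (- Y) = - kform eta X Y" using linear_neg[OF k_lin_r] by simp
lemma k_neg_l[simp]: "kform eta (- Y) X = - kform eta Y X" using linear_neg[OF k_lin_l] by simp
lemma k_0_r[simp]: "kform eta X 0 = 0" using linear_0[OF k_lin_r] by simp
lemma k_0_l[simp]: "kform eta 0 X = 0" using linear_0[OF k_lin_l] by simp
lemma k_sum_r: "kform eta X (\<Sum>i\<in>S. f i) = (\<Sum>i\<in>S. kform eta X (f i))" using linear_sum[OF k_lin_r] by simp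
lemma k_sum_l: "kform eta (\<Sum>i\<in>S. f i) X = (\<Sum>i\<in>S. kform eta (f i) X)" using linear_sum[OF k_lin_l] by simp

lemma so_expand: assumes "X \<in> so_alg eta"
  shows "X = (1/2) *\<^sub>R (\<Sum>j\<in>UNIV. eps j *\<^sub>R Lam eta (X *v b j) (b j))"
proof (rule mat_eqI)
  fix w
  have "(\<Sum>j\<in>UNIV. eps j *\<^sub>R Lam eta (X *v b j) (b j)) *v w
      = (\<Sum>j\<in>UNIV. (eps j * eta (b j) w) *\<^sub>R (X *v b j)) - (\<Sum>j\<in>UNIV. (eps j * eta (X *v b j) w) *\<^sub>R b j)"
    by (simp add: sum_mv Lam_apply algebra_simps sum_subtractf esym)
  also have "(\<Sum>j\<in>UNIV. (eps j * eta (b j) w) *\<^sub>R (X *v b j)) = X *v w"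
  proof -
    have "X *v w = X *v (\<Sum>j\<in>UNIV. (eps j * eta (b j) w) *\<^sub>R b j)" using expand[of w] by simp
    also have "\<dots> = (\<Sum>j\<in>UNIV. (eps j * eta (b j) w) *\<^sub>R (X *v b j))"
      by (simp add: linear_sum[OF matrix_vector_mul_linear])
    finally show ?thesis by simp
  qed
  also have "(\<Sum>j\<in>UNIV. (eps j * eta (X *v b j) w) *\<^sub>R b j) = - (X *v w)"
  proof -
    have "(\<Sum>j\<in>UNIV. (eps j * eta (X *v b j) w) *\<^sub>R b j) = (\<Sum>j\<in>UNIV. (eps j * eta (b j) (- (X *v w))) *\<^sub>R b j)"
      using soD[OF assms] by simp
    also have "\<dots> = - (X *v w)" by (rule expand[symmetric])
    finally show ?thesis .
  qed
  finally show "X *v w = ((1/2) *\<^sub>R (\<Sum>j\<in>UNIV. eps j *\<^sub>R Lam eta (X *v b j) (b j))) *v w"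
    by simp
qed

lemma k_Lam_r: assumes "X \<in> so_alg eta" shows "kform eta X (Lam eta x y) = eta y (X *v x)"
proof -
  have "kform eta X (Lam eta x y) = (1/2) * (\<Sum>j\<in>UNIV. eps j * kform eta (Lam eta (X *v b j) (b j)) (Lam eta x y))"
    by (subst so_expand[OF assms]) (simp add: k_sum_l)
  also have "\<dots> = (1/2) * ((\<Sum>j\<in>UNIV. (eps j * eta (b j) x) * eta (X *v b j) y)
       - (\<Sum>j\<in>UNIV. (eps j * eta (b j) y) * eta (X *v b j) x))"
    by (simp add: k_LL algebra_simps sum_subtractf esym)
  also have "\<dots> = (1/2) * (eta (X *v x) y - eta (X *v y) x)"
    by (simp add: contr[OF lin_eta_M2])
  also have "\<dots> = eta y (X *v x)" using soD[OF assms, of y x] esym[of "X *v x" y] by simp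
  finally show ?thesis .
qed

lemma k_Lam_l: assumes "Y \<in> so_alg eta" shows "kform eta (Lam eta x y) Y = eta y (Y *v x)"
proof -
  have "kform eta (Lam eta x y) Y = (1/2) * (\<Sum>j\<in>UNIV. eps j * kform eta (Lam eta x y) (Lam eta (Y *v b j) (b j)))"
  proof -
    have "kform eta (Lam eta x y) Y = kform eta (Lam eta x y) ((1/2) *\<^sub>R (\<Sum>j\<in>UNIV. eps j *\<^sub>R Lam eta (Y *v b j) (b j)))"
      by (simp only: so_expand[OF assms, symmetric])
    then show ?thesis by (simp add: k_sum_r)
  qed
  also have "\<dots> = (1/2) * ((\<Sum>j\<in>UNIV. (eps j * eta (b j) x) * eta y (Y *v b j))
       - (\<Sum>j\<in>UNIV. (eps j * eta (b j) y) * eta x (Y *v b j)))"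
    by (simp add: k_LL algebra_simps sum_subtractf esym)
  also have "\<dots> = (1/2) * (eta y (Y *v x) - eta x (Y *v y))"
    by (simp add: contr[OF lin_eta_M])
  also have "\<dots> = eta y (Y *v x)" using soD[OF assms, of y x] esym[of "Y *v y" x] by simp
  finally show ?thesis .
qed

end


context lor begin

lemma gdD:
  assumes "phi \<in> gdual eta"
  shows "X \<in> so_alg eta \<Longrightarrow> Y \<in> so_alg eta \<Longrightarrow> phi (X + Y) = phi X + phi Y"
    and "X \<in> so_alg eta \<Longrightarrow> phi (c *\<^sub>R X) = c * phi X"
    and "X \<notin> so_alg eta \<Longrightarrow> phi X = 0"
  using assms unfolding gdual_def by auto

lemma lin_so_sum:
  assumes add: "\<And>X Y. X \<in> so_alg eta \<Longrightarrow> Y \<in> so_alg eta \<Longrightarrow> phi (X + Y) = phi X + phi Y"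
    and sc: "\<And>c X. X \<in> so_alg eta \<Longrightarrow> phi (c *\<^sub>R X) = c * phi X"
    and fin: "finite S" and mem: "\<And>i. i \<in> S \<Longrightarrow> X i \<in> so_alg eta"
  shows "phi (\<Sum>i\<in>S. X i) = (\<Sum>i\<in>S. phi (X i))"
  using fin mem
proof (induction S rule: finite_induct)
  case empty
  have "phi 0 = phi (0 *\<^sub>R 0)" by simp
  also have "\<dots> = 0" using sc[OF so_0, of 0] by simp
  finally show ?case by simp
next
  case (insert x F)
  then show ?case by (simp add: add so_sum)
qed

lemma k_ext:
  assumes M: "M \<in> so_alg eta"
    and add: "\<And>X Y. X \<in> so_alg eta \<Longrightarrow> Y \<in> so_alg eta \<Longrightarrow> phi (X + Y) = phi X + phi Y"
    and sc: "\<And>c X. X \<in> so_alg eta \<Longrightarrow> phi (c *\<^sub>R X) = c * phi X"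
    and L: "\<And>x y. kform eta M (Lam eta x y) = phi (Lam eta x y)"
    and Y: "Y \<in> so_alg eta"
  shows "kform eta M Y = phi Y"
proof -
  define Z where "Z = (\<Sum>j\<in>UNIV. eps j *\<^sub>R Lam eta (Y *v b j) (b j))"
  have Zso: "Z \<in> so_alg eta" unfolding Z_def by (rule so_sum) (auto intro: so_scale Lam_so)
  have YZ: "Y = (1/2) *\<^sub>R Z" unfolding Z_def by (rule so_expand[OF Y])
  have "kform eta M Z = (\<Sum>j\<in>UNIV. eps j * kform eta M (Lam eta (Y *v b j) (b j)))"
    unfolding Z_def by (simp add: k_sum_r)
  also have "\<dots> = (\<Sum>j\<in>UNIV. phi (eps j *\<^sub>R Lam eta (Y *v b j) (b j)))"
    by (simp add: L sc Lam_so)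
  also have "\<dots> = phi Z" unfolding Z_def
    by (rule lin_so_sum[symmetric, OF add sc]) (auto intro: so_scale Lam_so)
  finally show ?thesis using YZ sc[OF Zso] by simp
qed

lemma kdual_so: "Y \<in> so_alg eta \<Longrightarrow> kdual eta X Y = kform eta X Y"
  by (simp add: kdual_def)

lemma kdual_inj: assumes "X \<in> so_alg eta" "X' \<in> so_alg eta" "kdual eta X = kdual eta X'"
  shows "X = X'"
proof (rule mat_eqI, rule nondeg_eq)
  fix x y
  have "kdual eta X (Lam eta x y) = kdual eta X' (Lam eta x y)" using assms(3) by simp
  then show "eta y (X *v x) = eta y (X' *v x)"
    by (simp add: kdual_so Lam_so k_Lam_r assms(1,2))
qed

lemma kdual_surj: assumes phi: "phi \<in> gdual eta"
  shows "\<exists>X \<in> so_alg eta. kdual eta X = phi"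
proof -
  note g = gdD[OF phi]
  define f where "f = (\<lambda>x. \<Sum>j\<in>UNIV. (eps j * phi (Lam eta x (b j))) *\<^sub>R b j)"
  have padd: "phi (Lam eta (x+y) w) = phi (Lam eta x w) + phi (Lam eta y w)" for x y w
    using g(1)[OF Lam_so Lam_so] by (simp add: Lam_add_l)
  have psc: "phi (Lam eta (c *\<^sub>R x) w) = c * phi (Lam eta x w)" for c x w
    using g(2)[OF Lam_so] by (simp add: Lam_scale_l)
  have padd2: "phi (Lam eta x (y+w)) = phi (Lam eta x y) + phi (Lam eta x w)" for x y w
    using g(1)[OF Lam_so Lam_so] by (simp add: Lam_add_r)
  have psc2: "phi (Lam eta x (c *\<^sub>R w)) = c * phi (Lam eta x w)" for c x w
    using g(2)[OF Lam_so] by (simp add: Lam_scale_r)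
  have lf: "linear f"
  proof (rule linearI)
    fix x y show "f (x + y) = f x + f y"
      unfolding f_def padd by (simp add: distrib_left scaleR_add_left sum.distrib)
  next
    fix c x show "f (c *\<^sub>R x) = c *\<^sub>R f x"
      unfolding f_def psc by (simp add: scaleR_sum_right mult.left_commute)
  qed
  define X where "X = matrix f"
  have Xx: "X *v x = f x" for x unfolding X_def by (rule mat_works_real[OF lf])
  have linw: "linear (\<lambda>w. phi (Lam eta x w))" for x
    by (rule linearI) (simp_all only: padd2 psc2 real_scaleR_def)
  have eXx: "eta y (X *v x) = phi (Lam eta x y)" for x y
  proof -
    have "eta y (X *v x) = (\<Sum>j\<in>UNIV. (eps j * phi (Lam eta x (b j))) * eta y (b j))"
      unfolding Xx f_def by (simp add: eta_sum_r)
    also have "\<dots> = (\<Sum>j\<in>UNIV. (eps j * eta (b j) y) * phi (Lam eta x (b j)))"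
      by (rule sum.cong) (simp_all add: esym[of y] mult_ac)
    also have "\<dots> = phi (Lam eta x y)" by (rule contr[OF linw])
    finally show ?thesis .
  qed
  have neg: "phi (Lam eta y x) = - phi (Lam eta x y)" for x y
  proof -
    have "Lam eta y x = (-1) *\<^sub>R Lam eta x y" using Lam_swap[of y x] by simp
    then show ?thesis using g(2)[OF Lam_so, of "-1" x y] by simp
  qed
  have Xso: "X \<in> so_alg eta"
  proof (rule soI)
    fix x y show "eta (X *v x) y = - eta x (X *v y)"
      using eXx[of y x] eXx[of x y] neg[of x y] esym[of "X *v x" y] by simp
  qed
  have "kdual eta X = phi"
  proof
    fix Y show "kdual eta X Y = phi Y"
    proof (cases "Y \<in> so_alg eta")
      case True
      have "kform eta X Y = phi Y"
        by (rule k_ext[OF Xso g(1) g(2) _ True]) (simp_all add: k_Lam_r Xso eXx)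
      then show ?thesis using True by (simp add: kdual_so)
    next
      case False then show ?thesis by (simp add: kdual_def g(3))
    qed
  qed
  then show ?thesis using Xso by blast
qed

lemma kinv_eq: assumes "X \<in> so_alg eta" "kdual eta X = phi" shows "kinv eta phi = X"
  unfolding kinv_def
proof (rule the_equality)
  show "X \<in> so_alg eta \<and> kdual eta X = phi" using assms by simp
  fix Y assume "Y \<in> so_alg eta \<and> kdual eta Y = phi"
  then show "Y = X" using kdual_inj[of Y X] assms by simp
qed

lemma kinv_gd: assumes "phi \<in> gdual eta"
  shows "kinv eta phi \<in> so_alg eta" "kdual eta (kinv eta phi) = phi"
proof -
  obtain X where "X \<in> so_alg eta" "kdual eta X = phi" using kdual_surj[OF assms] by blast
  then show "kinv eta phi \<in> so_alg eta" "kdual eta (kinv eta phi) = phi" using kinv_eq by auto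
qed

lemma gd_k: assumes "phi \<in> gdual eta" "Y \<in> so_alg eta" shows "phi Y = kform eta (kinv eta phi) Y"
proof -
  have "phi Y = kdual eta (kinv eta phi) Y" using kinv_gd(2)[OF assms(1)] by simp
  then show ?thesis using assms(2) by (simp add: kdual_so)
qed

lemma adj_adj: "adj (adj a) = a"
  by (rule adj_unique[symmetric]) (simp add: adj_eq2)

lemma ad_add: "ad (g::'n mat) (X + Y) = ad g X + ad g Y"
  by (rule mat_eqI) (simp add: ad_def)
lemma ad_scale: "ad (g::'n mat) (c *\<^sub>R X) = c *\<^sub>R ad g X"
  by (rule mat_eqI) (simp add: ad_def)

lemma kinv_adsharp:
  assumes a: "a \<in> O_grp eta" and psi: "psi \<in> gdual eta"
  shows "kinv eta (adsharp eta a psi) = ad a (kinv eta psi)"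
proof (rule kinv_eq)
  note P = kinv_gd[OF psi]
  show so: "ad a (kinv eta psi) \<in> so_alg eta" by (rule ad_so[OF a P(1)])
  have a': "adj a \<in> O_grp eta" by (rule O_adj_O[OF a])
  show "kdual eta (ad a (kinv eta psi)) = adsharp eta a psi"
  proof
    fix Y show "kdual eta (ad a (kinv eta psi)) Y = adsharp eta a psi Y"
    proof (cases "Y \<in> so_alg eta")
      case False then show ?thesis by (simp add: kdual_def adsharp_def)
    next
      case True
      have "kform eta (ad a (kinv eta psi)) Y = kform eta (kinv eta psi) (ad (adj a) Y)"
      proof (rule k_ext[OF so _ _ _ True])
        fix x y
        show "kform eta (ad a (kinv eta psi)) (Lam eta x y) = kform eta (kinv eta psi) (ad (adj a) (Lam eta x y))"
        proof -
          have "kform eta (ad a (kinv eta psi)) (Lam eta x y) = eta y (a *v (kinv eta psi *v (adj a *v x)))"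
            using k_Lam_r[OF so, of x y] by (simp add: ad_O[OF a])
          also have "\<dots> = eta (adj a *v y) (kinv eta psi *v (adj a *v x))"
            using adj_eq2[of "kinv eta psi *v (adj a *v x)" a y] esym by simp
          also have "\<dots> = kform eta (kinv eta psi) (ad (adj a) (Lam eta x y))"
            by (simp only: ad_Lam[OF a'] k_Lam_r[OF P(1)])
          finally show ?thesis .
        qed
      qed (simp_all add: ad_add ad_scale)
      also have "\<dots> = psi (ad (matrix_inv a) Y)"
        by (simp add: O_inv[OF a] gd_k[OF psi] ad_so[OF a' True])
      finally show ?thesis using True by (simp add: kdual_def adsharp_def)
    qed
  qed
qed

end


locale lor2 = lor eta b for eta :: "real^'n::finite \<Rightarrow> real^'n \<Rightarrow> real" and b +
  fixes s t :: "real^'n"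
  assumes ss: "eta s s = -1" and tt: "eta t t = 1" and st: "eta s t = 0"
begin

abbreviation "ff \<equiv> t - s"

lemma ts: "eta t s = 0" using st esym[of t s] by simp
lemma f_s[simp]: "eta ff s = 1" using ss ts by simp
lemma s_f[simp]: "eta s ff = 1" using ss st by simp
lemma f_f[simp]: "eta ff ff = 0" using ss tt st ts by simp
lemma t_f[simp]: "eta t ff = 1" using tt ts by simp
lemma f_t[simp]: "eta ff t = 1" using tt st by simp

definition pi :: "real^'n \<Rightarrow> real^'n" where "pi x = x + eta x s *\<^sub>R s"
lemma pi_perp[simp]: "eta (pi x) s = 0" by (simp add: pi_def ss)
lemma pi_perp'[simp]: "eta s (pi x) = 0" using pi_perp[of x] esym[of s "pi x"] by simp
lemma pi_id: "eta x s = 0 \<Longrightarrow> pi x = x" by (simp add: pi_def)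
lemma lin_pi: "linear pi" unfolding pi_def by (rule linearI) (simp_all add: algebra_simps)

lemma Lam_f_s: "eta x s = 0 \<Longrightarrow> Lam eta x ff *v s = x"
  by (simp add: Lam_apply ts ss)

lemma c_alg_eq: "c_alg eta s t = {Lam eta x ff | x. eta s x = 0}"
proof -
  have "subspace {Lam eta x ff | x. eta s x = 0}"
    unfolding subspace_def
  proof (intro conjI ballI allI)
    show "0 \<in> {Lam eta x ff | x. eta s x = 0}" using Lam_0_l[of ff] by (intro CollectI exI[of _ 0]) simp
  next
    fix X Y assume "X \<in> {Lam eta x ff | x. eta s x = 0}" "Y \<in> {Lam eta x ff | x. eta s x = 0}"
    then obtain x y where "X = Lam eta x ff" "eta s x = 0" "Y = Lam eta y ff" "eta s y = 0" by blast
    then show "X + Y \<in> {Lam eta x ff | x. eta s x = 0}"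
      by (intro CollectI exI[of _ "x + y"]) (simp add: Lam_add_l)
  next
    fix c X assume "X \<in> {Lam eta x ff | x. eta s x = 0}"
    then obtain x where "X = Lam eta x ff" "eta s x = 0" by blast
    then show "c *\<^sub>R X \<in> {Lam eta x ff | x. eta s x = 0}"
      by (intro CollectI exI[of _ "c *\<^sub>R x"]) (simp add: Lam_scale_l)
  qed
  then show ?thesis unfolding c_alg_def by (simp add: span_eq_iff)
qed

lemma a_alg_mem: "Y \<in> a_alg eta s \<longleftrightarrow> Y \<in> so_alg eta \<and> Y *v s = 0"
  by (simp add: a_alg_def)

lemma Pa_eq: assumes X: "X \<in> so_alg eta" shows "Pa eta s t X = X - Lam eta (X *v s) ff"
  unfolding Pa_def
proof (rule the_equality)
  have Xs: "eta (X *v s) s = 0" by (rule so_self[OF X])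
  have Xs': "eta s (X *v s) = 0" using Xs esym[of s "X *v s"] by simp
  have m1: "X - Lam eta (X *v s) ff \<in> a_alg eta s"
    unfolding a_alg_mem
  proof
    show "X - Lam eta (X *v s) ff \<in> so_alg eta" by (rule so_diff[OF X Lam_so])
    show "(X - Lam eta (X *v s) ff) *v s = 0" using Lam_f_s[OF Xs] by simp
  qed
  have m2: "X - (X - Lam eta (X *v s) ff) \<in> c_alg eta s t"
    unfolding c_alg_eq using Xs' by auto
  show "X - Lam eta (X *v s) ff \<in> a_alg eta s \<and> X - (X - Lam eta (X *v s) ff) \<in> c_alg eta s t"
    using m1 m2 by blast
  fix Y assume Y: "Y \<in> a_alg eta s \<and> X - Y \<in> c_alg eta s t"
  then obtain x where x: "X - Y = Lam eta x ff" "eta s x = 0" unfolding c_alg_eq by blast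
  have xs: "eta x s = 0" using x(2) esym[of s x] by simp
  have "x = X *v s"
  proof -
    have "(X - Y) *v s = x" using x(1) Lam_f_s[OF xs] by simp
    then show ?thesis using Y by (simp add: a_alg_mem)
  qed
  then have "X - Y = Lam eta (X *v s) ff" using x(1) by simp
  then show "Y = X - Lam eta (X *v s) ff" by (simp add: algebra_simps)
qed

lemma kperp: assumes C: "C \<in> so_alg eta" and perp: "\<And>Z. Z \<in> a_alg eta s \<Longrightarrow> kform eta C Z = 0"
  and Y: "Y \<in> so_alg eta"
  shows "kform eta C Y = eta (Y *v s) (C *v s)"
proof -
  have Ys: "eta (Y *v s) s = 0" by (rule so_self[OF Y])
  have Ys': "eta s (Y *v s) = 0" using Ys esym[of s "Y *v s"] by simp
  have Z: "Y - Lam eta (Y *v s) ff \<in> a_alg eta s"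
    using Y Ys by (auto simp: a_alg_mem Lam_f_s intro!: so_diff Lam_so)
  have "kform eta C Y = kform eta C (Y - Lam eta (Y *v s) ff) + kform eta C (Lam eta (Y *v s) ff)"
    by simp
  also have "\<dots> = eta ff (C *v (Y *v s))" using perp[OF Z] k_Lam_r[OF C] by simp
  also have "\<dots> = - eta (C *v ff) (Y *v s)" using soD[OF C, of ff "Y *v s"] by simp
  also have "eta (C *v t) (Y *v s) = 0"
  proof -
    have "Lam eta t (Y *v s) \<in> a_alg eta s"
      using Ys ts by (simp add: a_alg_mem Lam_so Lam_apply)
    then have "kform eta C (Lam eta t (Y *v s)) = 0" by (rule perp)
    then show ?thesis using k_Lam_r[OF C, of t "Y *v s"] esym[of "C *v t" "Y *v s"] by simp
  qed
  then have "- eta (C *v ff) (Y *v s) = eta (C *v s) (Y *v s)" by simp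
  finally show ?thesis using esym[of "C *v s" "Y *v s"] by simp
qed

lemma ann_D: assumes "phi \<in> ann eta s"
  shows "kinv eta phi \<in> so_alg eta" "\<And>Z. Z \<in> a_alg eta s \<Longrightarrow> kform eta (kinv eta phi) Z = 0"
    "phi \<in> gdual eta"
proof -
  have g: "phi \<in> gdual eta" and z: "\<And>Y. Y \<in> a_alg eta s \<Longrightarrow> phi Y = 0" using assms by (auto simp: ann_def)
  show "kinv eta phi \<in> so_alg eta" by (rule kinv_gd(1)[OF g])
  show "phi \<in> gdual eta" by (rule g)
  fix Z assume "Z \<in> a_alg eta s"
  then show "kform eta (kinv eta phi) Z = 0" using z gd_k[OF g] by (simp add: a_alg_mem)
qed

lemma ann_k: assumes "phi \<in> ann eta s" "Y \<in> so_alg eta"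
  shows "kform eta (kinv eta phi) Y = eta (Y *v s) (kinv eta phi *v s)"
  using kperp[OF ann_D(1)[OF assms(1)] ann_D(2)[OF assms(1)] assms(2)] .

lemma ann_val: assumes "phi \<in> ann eta s" "Y \<in> so_alg eta"
  shows "phi Y = eta (Y *v s) (kinv eta phi *v s)"
  using gd_k[OF ann_D(3)[OF assms(1)] assms(2)] ann_k[OF assms] by simp

lemma ann_perp: assumes "phi \<in> ann eta s" shows "eta (kinv eta phi *v s) s = 0"
  by (rule so_self[OF ann_D(1)[OF assms]])

lemma theta_inv: "kinv eta (kdual eta (Lam eta t s)) = Lam eta t s"
  by (rule kinv_eq[OF Lam_so refl])

lemma theta_perp: "Z \<in> a_alg eta s \<Longrightarrow> kform eta (Lam eta t s) Z = 0"
proof -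
  assume Z: "Z \<in> a_alg eta s"
  have "kform eta (Lam eta t s) Z = eta s (Z *v t)" using Z by (simp add: a_alg_mem k_Lam_l)
  also have "\<dots> = - eta (Z *v s) t" using soD[of Z s t] Z by (simp add: a_alg_mem)
  also have "\<dots> = 0" using Z by (simp add: a_alg_mem)
  finally show ?thesis .
qed

lemma theta_s: "Lam eta t s *v s = - t"
  by (simp add: Lam_apply ss ts)

end


inductive pf :: "('v::real_normed_vector \<Rightarrow> real) \<Rightarrow> bool" where
  pf_const: "pf (\<lambda>x. c)"
| pf_lin: "bounded_linear f \<Longrightarrow> pf f"
| pf_add: "pf f \<Longrightarrow> pf g \<Longrightarrow> pf (\<lambda>x. f x + g x)"
| pf_mult: "pf f \<Longrightarrow> pf g \<Longrightarrow> pf (\<lambda>x. f x * g x)"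

lemma pf_deriv: "pf f \<Longrightarrow> \<exists>D. (\<forall>x. (f has_derivative D x) (at x)) \<and> (\<forall>v. pf (\<lambda>x. D x v))"
proof (induction rule: pf.induct)
  case (pf_const c)
  then show ?case by (intro exI[of _ "\<lambda>x v. 0"]) (auto intro: pf.pf_const)
next
  case (pf_lin f)
  then show ?case by (intro exI[of _ "\<lambda>x. f"]) (auto intro: pf.pf_const bounded_linear.has_derivative[OF pf_lin.hyps] has_derivative_ident)
next
  case (pf_add f g)
  then obtain Df Dg where f: "\<forall>x. (f has_derivative Df x) (at x)" "\<forall>v. pf (\<lambda>x. Df x v)"
    and g: "\<forall>x. (g has_derivative Dg x) (at x)" "\<forall>v. pf (\<lambda>x. Dg x v)" by blast
  show ?case
    apply (intro exI[of _ "\<lambda>x v. Df x v + Dg x v"]) using f g by (auto intro!: has_derivative_add pf.pf_add)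
next
  case (pf_mult f g)
  then obtain Df Dg where f: "\<forall>x. (f has_derivative Df x) (at x)" "\<forall>v. pf (\<lambda>x. Df x v)"
    and g: "\<forall>x. (g has_derivative Dg x) (at x)" "\<forall>v. pf (\<lambda>x. Dg x v)" by blast
  show ?case
    apply (intro exI[of _ "\<lambda>x v. f x * Dg x v + Df x v * g x"])
    using f g pf_mult.hyps by (auto intro!: has_derivative_mult pf.pf_add pf.pf_mult)
qed

lemma pf_iter: "pf f \<Longrightarrow> pf (iter_dd vs f)"
proof (induction vs)
  case Nil then show ?case by simp
next
  case (Cons v vs)
  then obtain D where D: "\<forall>x. (iter_dd vs f has_derivative D x) (at x)" "\<forall>v. pf (\<lambda>x. D x v)"
    using pf_deriv by blast
  have "iter_dd (v # vs) f x = D x v" for x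
    using frechet_derivative_at[OF spec[OF D(1), of x]] by simp
  then have "iter_dd (v # vs) f = (\<lambda>x. D x v)" by blast
  then show ?case using D(2) by simp
qed

lemma pf_differentiable: "pf f \<Longrightarrow> f differentiable_on UNIV"
  using pf_deriv unfolding differentiable_on_def differentiable_def
  by (meson has_derivative_at_withinI)

lemma pf_smooth: "pf f \<Longrightarrow> smooth_on UNIV f"
  unfolding smooth_on_def using pf_iter pf_differentiable by blast

lemma pf_scale: "pf f \<Longrightarrow> pf (\<lambda>x. c * f x)"
  using pf_mult[OF pf_const] by blast
lemma pf_neg: "pf f \<Longrightarrow> pf (\<lambda>x. - f x)"
  using pf_scale[of f "-1"] by simp
lemma pf_diff: "pf f \<Longrightarrow> pf g \<Longrightarrow> pf (\<lambda>x. f x - g x)"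
  using pf_add[OF _ pf_neg, of f g] by simp
lemma pf_sum: "finite S \<Longrightarrow> (\<And>i. i \<in> S \<Longrightarrow> pf (f i)) \<Longrightarrow> pf (\<lambda>x. \<Sum>i\<in>S. f i x)"
proof (induction S rule: finite_induct)
  case empty then show ?case using pf_const[of 0] by simp
next
  case (insert a F) then show ?case by (simp add: pf_add)
qed
lemma pf_compose: "pf f \<Longrightarrow> bounded_linear L \<Longrightarrow> pf (\<lambda>x. f (L x))"
proof (induction rule: pf.induct)
  case (pf_lin f) then show ?case using bounded_linear_compose pf.pf_lin by blast
qed (auto intro: pf.intros)

definition pv :: "('v::real_normed_vector \<Rightarrow> real^'n) \<Rightarrow> bool" where
  "pv F \<longleftrightarrow> (\<forall>i. pf (\<lambda>x. F x $ i))"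
definition pm :: "('v::real_normed_vector \<Rightarrow> real^'n^'m) \<Rightarrow> bool" where
  "pm F \<longleftrightarrow> (\<forall>i j. pf (\<lambda>x. F x $ i $ j))"

lemma pv_const: "pv (\<lambda>x. c)" by (simp add: pv_def pf_const)
lemma pm_const: "pm (\<lambda>x. c)" by (simp add: pm_def pf_const)
lemma pm_lin: "bounded_linear L \<Longrightarrow> pm L"
  unfolding pm_def
proof (intro allI)
  fix i j assume L: "bounded_linear L"
  have "bounded_linear (\<lambda>x. (L x $ i) $ j)"
    using bounded_linear_compose[OF bounded_linear_vec_nth bounded_linear_compose[OF bounded_linear_vec_nth L]] by simp
  then show "pf (\<lambda>x. L x $ i $ j)" by (rule pf_lin)
qed
lemma pv_lin: "bounded_linear L \<Longrightarrow> pv L"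
  unfolding pv_def using bounded_linear_compose[OF bounded_linear_vec_nth] pf_lin by blast

lemma pv_add: "pv F \<Longrightarrow> pv G \<Longrightarrow> pv (\<lambda>x. F x + G x)" by (simp add: pv_def pf_add)
lemma pv_diff: "pv F \<Longrightarrow> pv G \<Longrightarrow> pv (\<lambda>x. F x - G x)" by (simp add: pv_def pf_diff)
lemma pv_scale: "pf c \<Longrightarrow> pv F \<Longrightarrow> pv (\<lambda>x. c x *\<^sub>R F x)" by (simp add: pv_def pf_mult)
lemma pm_add: "pm F \<Longrightarrow> pm G \<Longrightarrow> pm (\<lambda>x. F x + G x)" by (simp add: pm_def pf_add)
lemma pm_diff: "pm F \<Longrightarrow> pm G \<Longrightarrow> pm (\<lambda>x. F x - G x)" by (simp add: pm_def pf_diff)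
lemma pm_scale: "pf c \<Longrightarrow> pm F \<Longrightarrow> pm (\<lambda>x. c x *\<^sub>R F x)" by (simp add: pm_def pf_mult)

lemma pm_mul: assumes "pm F" "pm G" shows "pm (\<lambda>x. F x ** G x)"
  unfolding pm_def
proof (intro allI)
  fix i j
  have e: "(\<lambda>x. (F x ** G x) $ i $ j) = (\<lambda>x. \<Sum>k\<in>UNIV. F x $ i $ k * G x $ k $ j)"
    by (simp add: matrix_matrix_mult_def)
  have "pf (\<lambda>x. F x $ i $ k * G x $ k $ j)" for k
    using assms unfolding pm_def by (intro pf_mult) auto
  then show "pf (\<lambda>x. (F x ** G x) $ i $ j)" unfolding e by (intro pf_sum) auto
qed
lemma pv_mv: assumes "pm F" "pv G" shows "pv (\<lambda>x. F x *v G x)"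
  unfolding pv_def
proof (intro allI)
  fix i
  have e: "(\<lambda>x. (F x *v G x) $ i) = (\<lambda>x. \<Sum>k\<in>UNIV. F x $ i $ k * G x $ k)"
    by (simp add: matrix_vector_mult_def)
  have "pf (\<lambda>x. F x $ i $ k * G x $ k)" for k
    using assms unfolding pm_def pv_def by (intro pf_mult) auto
  then show "pf (\<lambda>x. (F x *v G x) $ i)" unfolding e by (intro pf_sum) auto
qed

lemma lin_expand: "linear (l :: real^'n \<Rightarrow> real) \<Longrightarrow> l w = (\<Sum>i\<in>UNIV. w $ i * l (axis i 1))"
proof -
  assume l: "linear l"
  have "l w = l (\<Sum>i\<in>UNIV. w $ i *\<^sub>R axis i 1)"
    using basis_expansion[of w] by (simp add: scalar_mult_eq_scaleR)
  also have "\<dots> = (\<Sum>i\<in>UNIV. w $ i * l (axis i 1))" by (simp add: linear_sum[OF l] linear_scale[OF l])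
  finally show ?thesis .
qed

lemma pf_lin_pv: assumes "linear (l :: real^'n \<Rightarrow> real)" "pv F" shows "pf (\<lambda>x. l (F x))"
proof -
  have e: "(\<lambda>x. l (F x)) = (\<lambda>x. \<Sum>i\<in>UNIV. F x $ i * l (axis i 1))"
    using lin_expand[OF assms(1)] by blast
  have "pf (\<lambda>x. F x $ i * l (axis i 1))" for i using assms(2) unfolding pv_def by (intro pf_mult pf_const) auto
  then show ?thesis unfolding e by (intro pf_sum) auto
qed

lemma pf_bil_pv: assumes "bilinear (B :: real^'n \<Rightarrow> real^'n \<Rightarrow> real)" "pv F" "pv G"
  shows "pf (\<lambda>x. B (F x) (G x))"
proof -
  have l1: "linear (\<lambda>v. B v w)" for w using assms(1) by (simp add: bilinear_def)
  have l2: "linear (B v)" for v using assms(1) by (simp add: bilinear_def)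
  have e: "B (F x) (G x) = (\<Sum>i\<in>UNIV. F x $ i * (\<Sum>j\<in>UNIV. G x $ j * B (axis i 1) (axis j 1)))" for x
  proof -
    have e1: "B (F x) (G x) = (\<Sum>i\<in>UNIV. F x $ i * B (axis i 1) (G x))"
      by (rule lin_expand[OF l1[of "G x"], of "F x"])
    have e2: "B (axis i 1) (G x) = (\<Sum>j\<in>UNIV. G x $ j * B (axis i 1) (axis j 1))" for i
      by (rule lin_expand[OF l2[of "axis i 1"], of "G x"])
    show ?thesis by (simp only: e1 e2)
  qed
  have "pf (\<lambda>x. G x $ j * B (axis i 1) (axis j 1))" for i j using assms(3) unfolding pv_def by (intro pf_mult pf_const) auto
  then have "pf (\<lambda>x. \<Sum>j\<in>UNIV. G x $ j * B (axis i 1) (axis j 1))" for i by (intro pf_sum) auto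
  then have "pf (\<lambda>x. F x $ i * (\<Sum>j\<in>UNIV. G x $ j * B (axis i 1) (axis j 1)))" for i
    using assms(2) unfolding pv_def by (intro pf_mult) auto
  then show ?thesis unfolding e by (intro pf_sum) auto
qed

lemma smooth_A_pf: "pf f \<Longrightarrow> smooth_A eta s f"
  unfolding smooth_A_def using pf_smooth by blast

lemma smooth_D_pf:
  assumes "pf G" "\<And>chi a. (chi, a) \<in> Dom eta s \<Longrightarrow> F (chi, a) = G (kinv eta chi, a)"
    "\<And>z. z \<notin> Dom eta s \<Longrightarrow> F z = 0"
  shows "smooth_D eta s F"
  unfolding smooth_D_def using assms pf_smooth by blast


lemma mpow_0[simp]: "mpow X 0 = mat 1" by (simp add: mpow_def)
lemma mpow_Suc: "mpow X (Suc m) = X ** mpow X m" by (simp add: mpow_def)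

lemma scale_mm_scale: fixes X M :: "real^'n^'n"
  shows "(c *\<^sub>R X) ** (d *\<^sub>R M) = (c * d) *\<^sub>R (X ** M)"
  by (simp add: vec_eq_iff matrix_matrix_mult_def sum_distrib_left mult_ac)

lemma scaleR_mm: fixes X M :: "real^'n^'n"
  shows "(c *\<^sub>R X) ** M = c *\<^sub>R (X ** M)"
  by (simp add: vec_eq_iff matrix_matrix_mult_def sum_distrib_left mult_ac)

lemma mpow_scale: "mpow (c *\<^sub>R (X::real^'n^'n)) m = c ^ m *\<^sub>R mpow X m"
  by (induction m) (simp_all add: mpow_Suc scale_mm_scale)

lemma mpow_bound: fixes Y :: "real^'n^'n"
  shows "\<bar>mpow Y m $ i $ j\<bar> \<le> (\<Sum>i\<in>UNIV. \<Sum>k\<in>UNIV. \<bar>Y $ i $ k\<bar>) ^ m"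
proof (induction m arbitrary: i j)
  case 0 then show ?case by (simp add: mat_def)
next
  case (Suc m)
  define K where "K = (\<Sum>i\<in>UNIV. \<Sum>k\<in>UNIV. \<bar>Y $ i $ k\<bar>)"
  have K0: "0 \<le> K" unfolding K_def by (simp add: sum_nonneg)
  have "\<bar>mpow Y (Suc m) $ i $ j\<bar> = \<bar>\<Sum>k\<in>UNIV. Y $ i $ k * mpow Y m $ k $ j\<bar>"
    by (simp add: mpow_Suc matrix_matrix_mult_def)
  also have "\<dots> \<le> (\<Sum>k\<in>UNIV. \<bar>Y $ i $ k\<bar> * \<bar>mpow Y m $ k $ j\<bar>)"
    by (rule order_trans[OF sum_abs]) (simp add: abs_mult)
  also have "\<dots> \<le> (\<Sum>k\<in>UNIV. \<bar>Y $ i $ k\<bar> * K ^ m)"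
    by (rule sum_mono, rule mult_left_mono) (use Suc[unfolded K_def[symmetric]] in auto)
  also have "\<dots> = (\<Sum>k\<in>UNIV. \<bar>Y $ i $ k\<bar>) * K ^ m" by (simp add: sum_distrib_right)
  also have "\<dots> \<le> K * K ^ m"
  proof (rule mult_right_mono)
    show "(\<Sum>k\<in>UNIV. \<bar>Y $ i $ k\<bar>) \<le> K" unfolding K_def
      by (rule member_le_sum) (auto intro: sum_nonneg)
  qed (use K0 in simp)
  finally show ?case by (simp add: K_def)
qed

lemma exp_like_summable: fixes K :: real assumes "0 \<le> K"
  shows "summable (\<lambda>m. inverse (fact m) * K ^ m)"
  by (rule summable_exp)

lemma mexp_summable: "summable (\<lambda>m. (1 / fact m) *\<^sub>R mpow (Z::real^'n^'n) m)"
proof -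
  define K where "K = (\<Sum>i\<in>UNIV. \<Sum>k\<in>UNIV. \<bar>Z $ i $ k\<bar>)"
  have K0: "0 \<le> K" unfolding K_def by (simp add: sum_nonneg)
  have nb: "norm M \<le> (\<Sum>i\<in>UNIV. \<Sum>j\<in>UNIV. \<bar>M $ i $ j\<bar>)" for M :: "real^'n^'n"
  proof -
    have "norm M \<le> (\<Sum>i\<in>UNIV. \<bar>norm (M $ i)\<bar>)"
      by (simp add: norm_vec_def L2_set_le_sum)
    also have "\<dots> \<le> (\<Sum>i\<in>UNIV. \<Sum>j\<in>UNIV. \<bar>M $ i $ j\<bar>)"
      by (rule sum_mono) (simp add: norm_le_l1_cart)
    finally show ?thesis .
  qed
  have b: "norm ((1 / fact m) *\<^sub>R mpow Z m) \<le> of_nat (CARD('n) * CARD('n)) * (inverse (fact m) * K ^ m)" for m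
  proof -
    have "norm ((1 / fact m) *\<^sub>R mpow Z m) = inverse (fact m) * norm (mpow Z m)"
      by (simp add: divide_inverse)
    also have "\<dots> \<le> inverse (fact m) * (\<Sum>i\<in>(UNIV::'n set). \<Sum>j\<in>(UNIV::'n set). K ^ m)"
    proof (rule mult_left_mono)
      show "norm (mpow Z m) \<le> (\<Sum>i\<in>(UNIV::'n set). \<Sum>j\<in>(UNIV::'n set). K ^ m)"
        by (rule order_trans[OF nb], intro sum_mono) (simp add: mpow_bound K_def)
    qed simp
    also have "\<dots> = of_nat (CARD('n) * CARD('n)) * (inverse (fact m) * K ^ m)" by simp
    finally show ?thesis .
  qed
  show ?thesis
    by (rule summable_comparison_test'[where N=0, OF summable_mult[OF summable_exp]]) (use b in auto)
qed

lemma mexp_entry: "mexp (\<tau> *\<^sub>R (Y::real^'n^'n)) $ i $ j = (\<Sum>m. (mpow Y m $ i $ j / fact m) * \<tau> ^ m)"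
proof -
  have bl: "bounded_linear (\<lambda>M::real^'n^'n. M $ i $ j)"
    by (rule bounded_linear_compose[OF bounded_linear_vec_nth bounded_linear_vec_nth])
  have "mexp (\<tau> *\<^sub>R Y) $ i $ j = (\<Sum>m. ((1 / fact m) *\<^sub>R mpow (\<tau> *\<^sub>R Y) m) $ i $ j)"
    unfolding mexp_def by (rule bounded_linear.suminf[OF bl mexp_summable])
  also have "\<dots> = (\<Sum>m. (mpow Y m $ i $ j / fact m) * \<tau> ^ m)"
    by (rule suminf_cong) (simp add: mpow_scale)
  finally show ?thesis .
qed

lemma entry_summable: fixes Y :: "real^'n^'n"
  shows "summable (\<lambda>m. (mpow Y m $ i $ j / fact m) * y ^ m)"
proof -
  define K where "K = (\<Sum>i\<in>UNIV. \<Sum>k\<in>UNIV. \<bar>Y $ i $ k\<bar>)"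
  have K0: "0 \<le> K" unfolding K_def by (simp add: sum_nonneg)
  have "norm ((mpow Y m $ i $ j / fact m) * y ^ m) \<le> inverse (fact m) * (K * \<bar>y\<bar>) ^ m" for m
  proof -
    have "norm ((mpow Y m $ i $ j / fact m) * y ^ m) = inverse (fact m) * (\<bar>mpow Y m $ i $ j\<bar> * \<bar>y\<bar> ^ m)"
      by (simp add: abs_mult power_abs divide_inverse)
    also have "\<dots> \<le> inverse (fact m) * (K ^ m * \<bar>y\<bar> ^ m)"
      by (intro mult_left_mono mult_right_mono) (auto simp: mpow_bound K_def)
    finally show ?thesis by (simp add: power_mult_distrib)
  qed
  then show ?thesis by (intro summable_comparison_test'[where N=0, OF summable_exp]) auto
qed

lemma mexp_zero: "mexp (0::real^'n^'n) = mat 1"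
proof -
  have "mexp (0 *\<^sub>R (0::real^'n^'n)) $ i $ j = mat 1 $ i $ j" for i j
  proof -
    have "mexp (0 *\<^sub>R (0::real^'n^'n)) $ i $ j = (\<Sum>m. (mpow (0::real^'n^'n) m $ i $ j / fact m) * 0 ^ m)"
      by (rule mexp_entry)
    also have "\<dots> = mpow (0::real^'n^'n) 0 $ i $ j / fact 0" by (rule powser_zero)
    finally show ?thesis by simp
  qed
  then show ?thesis by (simp add: vec_eq_iff)
qed

lemma entry_deriv: fixes Y :: "real^'n^'n"
  shows "((\<lambda>\<tau>. mexp (\<tau> *\<^sub>R Y) $ i $ j) has_field_derivative (Y $ i $ j)) (at 0)"
proof -
  define c where "c = (\<lambda>m. mpow Y m $ i $ j / fact m)"
  have "((\<lambda>\<tau>. \<Sum>m. c m * \<tau> ^ m) has_field_derivative (\<Sum>n. diffs c n * 0 ^ n)) (at 0)"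
    by (rule termdiffs_strong_converges_everywhere) (unfold c_def, rule entry_summable)
  moreover have "(\<Sum>n. diffs c n * 0 ^ n) = Y $ i $ j"
  proof -
    have "(\<Sum>n. diffs c n * 0 ^ n) = diffs c 0" by (rule powser_zero)
    also have "\<dots> = Y $ i $ j" by (simp add: diffs_def c_def mpow_Suc)
    finally show ?thesis .
  qed
  moreover have "(\<lambda>\<tau>. mexp (\<tau> *\<^sub>R Y) $ i $ j) = (\<lambda>\<tau>. \<Sum>m. c m * \<tau> ^ m)"
    by (simp add: mexp_entry c_def)
  ultimately show ?thesis by simp
qed

lemma vec_deriv: fixes F :: "real \<Rightarrow> real^'n^'m"
  assumes "\<And>i j. ((\<lambda>\<tau>. F \<tau> $ i $ j) has_field_derivative (D $ i $ j)) (at x)"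
  shows "(F has_vector_derivative D) (at x)"
  unfolding has_vector_derivative_def
proof (subst has_derivative_componentwise_within, intro ballI)
  fix u :: "real^'n^'m" assume "u \<in> Basis"
  then obtain i j where u: "u = axis i (axis j 1)" by (auto simp: Basis_vec_def)
  have e: "(\<lambda>y. y \<bullet> u) = (\<lambda>y. y $ i $ j)" for dummy :: bool
    by (rule ext) (simp add: u inner_axis)
  have "((\<lambda>\<tau>. F \<tau> $ i $ j) has_derivative (\<lambda>h. h * D $ i $ j)) (at x)"
  proof -
    have e2: "(\<lambda>h. h * D $ i $ j) = (*) (D $ i $ j)" by (auto simp: mult.commute)
    show ?thesis using assms[of i j] unfolding e2 by (simp add: has_field_derivative_def)
  qed
  then show "((\<lambda>\<tau>. F \<tau> \<bullet> u) has_derivative (\<lambda>h. (h *\<^sub>R D) \<bullet> u)) (at x within UNIV)"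
    by (simp add: u inner_axis)
qed

lemma mexp_vderiv: "((\<lambda>\<tau>. mexp (\<tau> *\<^sub>R (Y::real^'n^'n))) has_vector_derivative Y) (at 0)"
  by (rule vec_deriv) (rule entry_deriv)

lemma curve_deriv: fixes a Y :: "real^'n^'n"
  assumes g: "(g has_derivative Dg) (at a)"
  shows "deriv (\<lambda>\<tau>. g (mexp (\<tau> *\<^sub>R Y) ** a)) 0 = Dg (Y ** a)"
proof -
  have bl: "bounded_linear (\<lambda>M::real^'n^'n. M ** a)"
  proof -
    have "linear (\<lambda>M::real^'n^'n. M ** a)"
      by (rule linearI) (simp_all add: vec_eq_iff matrix_matrix_mult_def sum.distrib algebra_simps sum_distrib_left)
    then show ?thesis by (simp add: linear_conv_bounded_linear)
  qed
  have c: "((\<lambda>\<tau>. mexp (\<tau> *\<^sub>R Y) ** a) has_derivative (\<lambda>h. (h *\<^sub>R Y) ** a)) (at 0)"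
    using bounded_linear.has_derivative[OF bl mexp_vderiv[unfolded has_vector_derivative_def]] .
  have a0: "mexp (0 *\<^sub>R Y) ** a = a" by (simp add: mexp_zero)
  have g': "(g has_derivative Dg) (at (mexp (0 *\<^sub>R Y) ** a))" using g a0 by simp
  have "((\<lambda>\<tau>. g (mexp (\<tau> *\<^sub>R Y) ** a)) has_derivative (\<lambda>h. Dg ((h *\<^sub>R Y) ** a))) (at 0)"
    using diff_chain_at[OF c g'] by (simp add: o_def)
  moreover have "Dg ((h *\<^sub>R Y) ** a) = h * Dg (Y ** a)" for h
  proof -
    have "linear Dg" using has_derivative_bounded_linear[OF g] bounded_linear.linear by blast
    then show ?thesis by (simp add: scaleR_mm linear_scale)
  qed
  ultimately have "((\<lambda>\<tau>. g (mexp (\<tau> *\<^sub>R Y) ** a)) has_derivative (\<lambda>h. h * Dg (Y ** a))) (at 0)"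
    by simp
  moreover have "(\<lambda>h. h * Dg (Y ** a)) = (*) (Dg (Y ** a))" by (auto simp: mult.commute)
  ultimately have "((\<lambda>\<tau>. g (mexp (\<tau> *\<^sub>R Y) ** a)) has_field_derivative Dg (Y ** a)) (at 0)"
    by (simp add: has_field_derivative_def)
  then show ?thesis by (rule DERIV_imp_deriv)
qed


context lor2 begin

lemma A_O: "a \<in> A_grp eta s \<Longrightarrow> a \<in> O_grp eta"
  using connected_component_subset unfolding A_grp_def SO0_def by blast

definition sig :: "'n mat \<Rightarrow> real" where "sig a = - eta (a *v s) s"

lemma A_sig: assumes "a \<in> A_grp eta s" shows "a *v s = sig a *\<^sub>R s" "sig a * sig a = 1"
proof -
  have "a *v s = s \<or> a *v s = - s" using assms by (simp add: A_grp_def)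
  then show "a *v s = sig a *\<^sub>R s" "sig a * sig a = 1" by (auto simp: sig_def ss)
qed

lemma A_eta_s: assumes "a \<in> A_grp eta s" shows "eta (a *v y) s = sig a * eta y s"
proof -
  have O: "a \<in> O_grp eta" by (rule A_O[OF assms])
  have "eta (a *v y) (a *v s) = eta y s" using O by (simp add: O_def2)
  then have "sig a * eta (a *v y) s = eta y s" using A_sig[OF assms] by simp
  then have "sig a * (sig a * eta (a *v y) s) = sig a * eta y s" by simp
  then show ?thesis using A_sig(2)[OF assms] by (simp add: mult.assoc[symmetric])
qed

lemma A_adj_s: assumes "a \<in> A_grp eta s" shows "adj a *v s = sig a *\<^sub>R s"
proof -
  have O: "a \<in> O_grp eta" by (rule A_O[OF assms])
  have "adj a *v (a *v s) = s" by (rule O_adj_apply[OF O])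
  then have "sig a *\<^sub>R (adj a *v s) = s" using A_sig(1)[OF assms] by simp
  then have "sig a *\<^sub>R (sig a *\<^sub>R (adj a *v s)) = sig a *\<^sub>R s" by simp
  then show ?thesis using A_sig(2)[OF assms] by simp
qed

lemma Dom_D: assumes "(chi, a) \<in> Dom eta s"
  shows "chi \<in> ann eta s" "a \<in> A_grp eta s" "a \<in> O_grp eta"
  using assms A_O by (auto simp: Dom_def)

definition rep :: "('n pt \<Rightarrow> real) \<Rightarrow> ('n mat \<times> 'n mat \<Rightarrow> real) \<Rightarrow> bool" where
  "rep F G \<longleftrightarrow> pf G \<and> (\<forall>chi a. (chi, a) \<in> Dom eta s \<longrightarrow> F (chi, a) = G (kinv eta chi, a))
      \<and> (\<forall>z. z \<notin> Dom eta s \<longrightarrow> F z = 0)"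

lemma rep_smooth: "rep F G \<Longrightarrow> smooth_D eta s F"
  unfolding rep_def by (intro smooth_D_pf) auto

lemma rep_mult: "rep F G \<Longrightarrow> rep F' G' \<Longrightarrow> rep (\<lambda>w. F w * F' w) (\<lambda>x. G x * G' x)"
  unfolding rep_def by (auto intro: pf_mult)

lemma rep_sum: "finite S \<Longrightarrow> (\<And>i. i \<in> S \<Longrightarrow> rep (F i) (G i)) \<Longrightarrow> rep (\<lambda>w. \<Sum>i\<in>S. F i w) (\<lambda>x. \<Sum>i\<in>S. G i x)"
  unfolding rep_def by (auto intro!: pf_sum)

lemma bl_snd_pf: "pf f \<Longrightarrow> pf (\<lambda>x::'n mat \<times> 'n mat. f (snd x))"
  by (erule pf_compose[where L=snd]) (rule bounded_linear_snd)

lemma rep_pull: "pf f \<Longrightarrow> rep (pull eta s f) (\<lambda>x. f (snd x))"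
  unfolding rep_def pull_def by (auto intro: bl_snd_pf)

lemma pm_adj: "pm F \<Longrightarrow> pm (\<lambda>x. adj (F x))"
proof -
  assume F: "pm F"
  have ent: "adj M $ i $ k = (\<Sum>j\<in>UNIV. eps j * eta (M *v b j) (axis k 1) * b j $ i)" for M i k
  proof -
    have "adj M $ i $ k = (adj M *v axis k 1) $ i"
      by (simp add: matrix_vector_mult_def axis_def if_distrib cong: if_cong)
    then show ?thesis by (simp add: adj_apply)
  qed
  show ?thesis unfolding pm_def
  proof (intro allI)
    fix i k
    have "pf (\<lambda>x. eta (F x *v b j) (axis k 1))" for j
      by (rule pf_bil_pv[OF bil pv_mv[OF F pv_const] pv_const])
    then have "pf (\<lambda>x. eps j * eta (F x *v b j) (axis k 1) * b j $ i)" for j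
      by (intro pf_mult pf_const) 
    then show "pf (\<lambda>x. adj (F x) $ i $ k)" unfolding ent by (intro pf_sum) auto
  qed
qed

lemma rep_XL: assumes p: "p \<in> so_alg eta"
  shows "rep (XL eta s p) (\<lambda>x. eta ((snd x ** p ** adj (snd x)) *v s) (fst x *v s))"
  unfolding rep_def
proof (intro conjI allI impI)
  have ps: "pm (\<lambda>x::'n mat \<times> 'n mat. snd x)" by (rule pm_lin) (rule bounded_linear_snd)
  have pf': "pm (\<lambda>x::'n mat \<times> 'n mat. fst x)" by (rule pm_lin) (rule bounded_linear_fst)
  show "pf (\<lambda>x. eta ((snd x ** p ** adj (snd x)) *v s) (fst x *v s))"
    by (rule pf_bil_pv[OF bil]) (intro pv_mv pm_mul pm_adj ps pm_const pv_const pf')+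
  fix chi a assume z: "(chi, a) \<in> Dom eta s"
  note D = Dom_D[OF z]
  have "XL eta s p (chi, a) = chi (ad a p)" using z by (simp add: XL_def)
  also have "\<dots> = eta (ad a p *v s) (kinv eta chi *v s)" by (rule ann_val[OF D(1) ad_so[OF D(3) p]])
  finally show "XL eta s p (chi, a) = eta ((snd (kinv eta chi, a) ** p ** adj (snd (kinv eta chi, a))) *v s) (fst (kinv eta chi, a) *v s)"
    by (simp add: ad_O[OF D(3)])
next
  fix z assume "z \<notin> Dom eta s" then show "XL eta s p z = 0" by (cases z) (simp add: XL_def)
qed

end

locale lor3 = lor2 eta b s t for eta :: "real^'n::finite \<Rightarrow> real^'n \<Rightarrow> real" and b s t +
  fixes br :: "('n pt \<Rightarrow> real) \<Rightarrow> ('n pt \<Rightarrow> real) \<Rightarrow> 'n pt \<Rightarrow> real"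
  assumes isbr: "is_poisson_bracket eta s t br"
begin

lemma br_add: "smooth_D eta s F \<Longrightarrow> smooth_D eta s G \<Longrightarrow> smooth_D eta s H \<Longrightarrow> z \<in> Dom eta s \<Longrightarrow>
    br (\<lambda>w. F w + G w) H z = br F H z + br G H z"
  using isbr unfolding is_poisson_bracket_def by blast
lemma br_anti: "smooth_D eta s F \<Longrightarrow> smooth_D eta s G \<Longrightarrow> z \<in> Dom eta s \<Longrightarrow>
    br F G z = - br G F z"
  using isbr unfolding is_poisson_bracket_def by blast
lemma br_leib: "smooth_D eta s F \<Longrightarrow> smooth_D eta s G \<Longrightarrow> smooth_D eta s H \<Longrightarrow> z \<in> Dom eta s \<Longrightarrow>
    br F (\<lambda>w. G w * H w) z = br F G z * H z + G z * br F H z"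
  using isbr unfolding is_poisson_bracket_def by blast
lemma br_XX: "p \<in> c_alg eta s t \<Longrightarrow> q \<in> c_alg eta s t \<Longrightarrow> z \<in> Dom eta s \<Longrightarrow>
    br (XL eta s p) (XL eta s q) z = XL eta s (lie_br p q) z"
  using isbr unfolding is_poisson_bracket_def by blast
lemma br_Xf: "p \<in> c_alg eta s t \<Longrightarrow> smooth_A eta s f \<Longrightarrow> z \<in> Dom eta s \<Longrightarrow>
    br (XL eta s p) (pull eta s f) z = pull eta s (PiL eta s t p f) z"
  using isbr unfolding is_poisson_bracket_def by blast
lemma br_ff: "smooth_A eta s f1 \<Longrightarrow> smooth_A eta s f2 \<Longrightarrow> z \<in> Dom eta s \<Longrightarrow>
    br (pull eta s f1) (pull eta s f2) z = 0"
  using isbr unfolding is_poisson_bracket_def by blast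

lemma br_sum_l: assumes "finite S" "\<And>i. i \<in> S \<Longrightarrow> rep (F i) (G i)" "smooth_D eta s H" "z \<in> Dom eta s"
  shows "br (\<lambda>w. \<Sum>i\<in>S. F i w) H z = (\<Sum>i\<in>S. br (F i) H z)"
  using assms(1,2)
proof (induction S rule: finite_induct)
  case empty
  have r0: "rep (\<lambda>w. 0) (\<lambda>x. 0)" by (simp add: rep_def pf_const)
  have "br (\<lambda>w. 0 + 0) H z = br (\<lambda>w. 0) H z + br (\<lambda>w. 0) H z"
    by (rule br_add[OF rep_smooth[OF r0] rep_smooth[OF r0] assms(3,4)])
  then show ?case by simp
next
  case (insert x F')
  have r1: "rep (F x) (G x)" using insert by simp
  have r2: "rep (\<lambda>w. \<Sum>i\<in>F'. F i w) (\<lambda>y. \<Sum>i\<in>F'. G i y)" using insert by (intro rep_sum) auto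
  have "br (\<lambda>w. \<Sum>i\<in>insert x F'. F i w) H z = br (\<lambda>w. F x w + (\<Sum>i\<in>F'. F i w)) H z"
    using insert by simp
  also have "\<dots> = br (F x) H z + br (\<lambda>w. \<Sum>i\<in>F'. F i w) H z"
    by (rule br_add[OF rep_smooth[OF r1] rep_smooth[OF r2] assms(3,4)])
  finally show ?case using insert by simp
qed

lemma br_sum_r: assumes "finite S" "\<And>i. i \<in> S \<Longrightarrow> rep (F i) (G i)" "rep H K" "z \<in> Dom eta s"
  shows "br H (\<lambda>w. \<Sum>i\<in>S. F i w) z = (\<Sum>i\<in>S. br H (F i) z)"
proof -
  have r2: "rep (\<lambda>w. \<Sum>i\<in>S. F i w) (\<lambda>y. \<Sum>i\<in>S. G i y)" using assms by (intro rep_sum) auto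
  have "br H (\<lambda>w. \<Sum>i\<in>S. F i w) z = - br (\<lambda>w. \<Sum>i\<in>S. F i w) H z"
    by (rule br_anti[OF rep_smooth[OF assms(3)] rep_smooth[OF r2] assms(4)])
  also have "\<dots> = - (\<Sum>i\<in>S. br (F i) H z)" using br_sum_l[OF assms(1,2) rep_smooth[OF assms(3)] assms(4)] by simp
  also have "\<dots> = (\<Sum>i\<in>S. br H (F i) z)"
    by (simp add: sum_negf[symmetric] br_anti[OF rep_smooth[OF assms(3)] rep_smooth[OF assms(2)] assms(4)])
  finally show ?thesis .
qed

lemma pull_val: "(chi, a) \<in> Dom eta s \<Longrightarrow> pull eta s f (chi, a) = f a"
  by (simp add: pull_def)

lemma br_prod:
  assumes p: "p \<in> c_alg eta s t" and q: "q \<in> c_alg eta s t"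
    and f: "pf f" and g: "pf g" and z: "z \<in> Dom eta s"
  shows "br (\<lambda>w. pull eta s f w * XL eta s p w) (\<lambda>w. pull eta s g w * XL eta s q w) z
     = pull eta s f z * pull eta s g z * (- XL eta s (lie_br q p) z)
       + pull eta s f z * XL eta s q z * pull eta s (PiL eta s t p g) z
       - pull eta s g z * XL eta s p z * pull eta s (PiL eta s t q f) z"
proof -
  have pso: "p \<in> so_alg eta" "q \<in> so_alg eta" using p q
    by (auto simp: c_alg_eq intro: Lam_so)
  note rf = rep_pull[OF f] and rg = rep_pull[OF g]
  note rX = rep_XL[OF pso(1)] and rY = rep_XL[OF pso(2)]
  note sf = rep_smooth[OF rf] and sg = rep_smooth[OF rg] and sX = rep_smooth[OF rX] and sY = rep_smooth[OF rY]
  have sFX: "smooth_D eta s (\<lambda>w. pull eta s f w * XL eta s p w)" by (rule rep_smooth[OF rep_mult[OF rf rX]])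
  have Af: "smooth_A eta s f" "smooth_A eta s g" using f g by (auto intro: smooth_A_pf)
  have e1: "br (\<lambda>w. pull eta s f w * XL eta s p w) (pull eta s g) z = pull eta s f z * pull eta s (PiL eta s t p g) z"
  proof -
    have "br (\<lambda>w. pull eta s f w * XL eta s p w) (pull eta s g) z = - br (pull eta s g) (\<lambda>w. pull eta s f w * XL eta s p w) z"
      by (rule br_anti[OF sFX sg z])
    also have "\<dots> = - (br (pull eta s g) (pull eta s f) z * XL eta s p z + pull eta s f z * br (pull eta s g) (XL eta s p) z)"
      by (simp add: br_leib[OF sg sf sX z])
    also have "br (pull eta s g) (pull eta s f) z = 0" by (rule br_ff[OF Af(2) Af(1) z])
    also have "br (pull eta s g) (XL eta s p) z = - br (XL eta s p) (pull eta s g) z" by (rule br_anti[OF sg sX z])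
    also have "br (XL eta s p) (pull eta s g) z = pull eta s (PiL eta s t p g) z" by (rule br_Xf[OF p Af(2) z])
    finally show ?thesis by simp
  qed
  have e2: "br (\<lambda>w. pull eta s f w * XL eta s p w) (XL eta s q) z
      = - (pull eta s (PiL eta s t q f) z * XL eta s p z + pull eta s f z * XL eta s (lie_br q p) z)"
  proof -
    have "br (\<lambda>w. pull eta s f w * XL eta s p w) (XL eta s q) z = - br (XL eta s q) (\<lambda>w. pull eta s f w * XL eta s p w) z"
      by (rule br_anti[OF sFX sY z])
    also have "\<dots> = - (br (XL eta s q) (pull eta s f) z * XL eta s p z + pull eta s f z * br (XL eta s q) (XL eta s p) z)"
      by (simp add: br_leib[OF sY sf sX z])
    also have "br (XL eta s q) (pull eta s f) z = pull eta s (PiL eta s t q f) z" by (rule br_Xf[OF q Af(1) z])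
    also have "br (XL eta s q) (XL eta s p) z = XL eta s (lie_br q p) z" by (rule br_XX[OF q p z])
    finally show ?thesis .
  qed
  have "br (\<lambda>w. pull eta s f w * XL eta s p w) (\<lambda>w. pull eta s g w * XL eta s q w) z
      = br (\<lambda>w. pull eta s f w * XL eta s p w) (pull eta s g) z * XL eta s q z
        + pull eta s g z * br (\<lambda>w. pull eta s f w * XL eta s p w) (XL eta s q) z"
    by (rule br_leib[OF sFX sg sY z])
  also have "\<dots> = pull eta s f z * pull eta s g z * (- XL eta s (lie_br q p) z)
       + pull eta s f z * XL eta s q z * pull eta s (PiL eta s t p g) z
       - pull eta s g z * XL eta s p z * pull eta s (PiL eta s t q f) z"
    unfolding e1 e2 by (simp add: algebra_simps)
  finally show ?thesis .
qed

lemma br_prod_pull: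
  assumes p: "p \<in> c_alg eta s t" and f: "pf f" and h: "pf h" and z: "z \<in> Dom eta s"
  shows "br (\<lambda>w. pull eta s f w * XL eta s p w) (pull eta s h) z = pull eta s f z * pull eta s (PiL eta s t p h) z"
proof -
  have pso: "p \<in> so_alg eta" using p by (auto simp: c_alg_eq intro: Lam_so)
  note rf = rep_pull[OF f] and rh = rep_pull[OF h] and rX = rep_XL[OF pso]
  note sf = rep_smooth[OF rf] and sh = rep_smooth[OF rh] and sX = rep_smooth[OF rX]
  have sFX: "smooth_D eta s (\<lambda>w. pull eta s f w * XL eta s p w)" by (rule rep_smooth[OF rep_mult[OF rf rX]])
  have Af: "smooth_A eta s f" "smooth_A eta s h" using f h by (auto intro: smooth_A_pf)
  have "br (\<lambda>w. pull eta s f w * XL eta s p w) (pull eta s h) z = - br (pull eta s h) (\<lambda>w. pull eta s f w * XL eta s p w) z"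
    by (rule br_anti[OF sFX sh z])
  also have "\<dots> = - (br (pull eta s h) (pull eta s f) z * XL eta s p z + pull eta s f z * br (pull eta s h) (XL eta s p) z)"
    by (simp add: br_leib[OF sh sf sX z])
  also have "br (pull eta s h) (pull eta s f) z = 0" by (rule br_ff[OF Af(2) Af(1) z])
  also have "br (pull eta s h) (XL eta s p) z = - br (XL eta s p) (pull eta s h) z" by (rule br_anti[OF sh sX z])
  also have "br (XL eta s p) (pull eta s h) z = pull eta s (PiL eta s t p h) z" by (rule br_Xf[OF p Af(2) z])
  finally show ?thesis by simp
qed

end


lemma madd_mm: fixes A B C :: "real^'n^'n" shows "(A + B) ** C = A ** C + B ** C"
  by (simp add: vec_eq_iff matrix_matrix_mult_def sum.distrib algebra_simps)
lemma mdiff_mm: fixes A B C :: "real^'n^'n" shows "(A - B) ** C = A ** C - B ** C"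
  by (simp add: vec_eq_iff matrix_matrix_mult_def sum_subtractf algebra_simps)

context lor2 begin

definition xb :: "'n \<Rightarrow> real^'n" where "xb i = pi (axis i 1)"
definition PP :: "'n \<Rightarrow> 'n mat" where "PP i = Lam eta (xb i) ff"
definition Yv :: "'n mat \<Rightarrow> real^'n \<Rightarrow> 'n mat" where
  "Yv a x = Lam eta (a *v x) (a *v ff) - Lam eta (sig a *\<^sub>R (a *v x)) ff"

lemma xb_perp: "eta (xb i) s = 0" by (simp add: xb_def)

lemma Lam_c: "eta x s = 0 \<Longrightarrow> Lam eta x ff \<in> c_alg eta s t"
  unfolding c_alg_eq using esym[of s x] by auto

lemma PP_c: "PP i \<in> c_alg eta s t" unfolding PP_def by (rule Lam_c[OF xb_perp])
lemma PP_so: "PP i \<in> so_alg eta" unfolding PP_def by (rule Lam_so)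

lemma LE: "linear (L :: real^'n \<Rightarrow> real) \<Longrightarrow> (\<Sum>i\<in>UNIV. u $ i * L (xb i)) = L (pi u)"
proof -
  assume L: "linear L"
  have "linear (\<lambda>x. L (pi x))" using linear_compose[OF lin_pi L] by (simp add: o_def)
  from lin_expand[OF this, of u] show ?thesis by (simp add: xb_def)
qed

lemma XL_val: assumes z: "(chi, a) \<in> Dom eta s" and x: "eta x s = 0"
  shows "XL eta s (Lam eta x ff) (chi, a) = sig a * eta (a *v x) (kinv eta chi *v s)"
proof -
  note D = Dom_D[OF z]
  have "XL eta s (Lam eta x ff) (chi, a) = chi (ad a (Lam eta x ff))" using z by (simp add: XL_def)
  also have "\<dots> = eta (ad a (Lam eta x ff) *v s) (kinv eta chi *v s)"
    by (rule ann_val[OF D(1) ad_so[OF D(3) Lam_so]])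
  also have "ad a (Lam eta x ff) *v s = sig a *\<^sub>R (a *v x)"
    using A_eta_s[OF D(2), of ff] A_eta_s[OF D(2), of x] x
    by (simp add: ad_Lam[OF D(3)] Lam_apply ss ts)
  finally show ?thesis by simp
qed

lemma Pa_val: assumes a: "a \<in> A_grp eta s" and x: "eta x s = 0"
  shows "Pa eta s t (ad a (Lam eta x ff)) = Yv a x"
proof -
  have O: "a \<in> O_grp eta" by (rule A_O[OF a])
  have e1: "ad a (Lam eta x ff) *v s = sig a *\<^sub>R (a *v x)"
    using A_eta_s[OF a, of ff] A_eta_s[OF a, of x] x
    by (simp add: ad_Lam[OF O] Lam_apply ss ts)
  have "Pa eta s t (ad a (Lam eta x ff)) = ad a (Lam eta x ff) - Lam eta (ad a (Lam eta x ff) *v s) ff"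
    by (rule Pa_eq[OF ad_so[OF O Lam_so]])
  also have "\<dots> = ad a (Lam eta x ff) - Lam eta (sig a *\<^sub>R (a *v x)) ff" by (simp only: e1)
  also have "\<dots> = Yv a x" by (simp add: Yv_def ad_Lam[OF O])
  finally show ?thesis .
qed

lemma PiL_val: assumes a: "a \<in> A_grp eta s" and x: "eta x s = 0" and g: "(g has_derivative Dg) (at a)"
  shows "PiL eta s t (Lam eta x ff) g a = Dg (Yv a x ** a)"
  unfolding PiL_def Pa_val[OF a x] by (rule curve_deriv[OF g])

lemma lie_Lam_gen: assumes "eta f f = 0"
  shows "lie_br (Lam eta x f) (Lam eta y f) = Lam eta (eta f y *\<^sub>R x - eta f x *\<^sub>R y) f"
  by (rule mat_eqI) (simp add: lie_br_def Lam_apply algebra_simps assms esym[of x f] esym[of y f] esym[of y x])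

lemma lie_Lam: "lie_br (Lam eta x ff) (Lam eta y ff) = Lam eta (eta ff y *\<^sub>R x - eta ff x *\<^sub>R y) ff"
  by (rule lie_Lam_gen[OF f_f])

lemma Yv_add: "Yv a (x + y) = Yv a x + Yv a y"
  by (simp add: Yv_def Lam_add_l scaleR_add_right)
lemma Yv_scale: "Yv a (c *\<^sub>R x) = c *\<^sub>R Yv a x"
  by (simp add: Yv_def Lam_scale_l scaleR_diff_right)

lemma lin_DY: assumes "linear D" shows "linear (\<lambda>x. D (Yv a x ** a))"
  by (rule linearI) (simp_all add: Yv_add Yv_scale madd_mm scaleR_mm linear_add[OF assms] linear_scale[OF assms])

definition SU :: "('n mat \<Rightarrow> real^'n) \<Rightarrow> 'n pt \<Rightarrow> real" where
  "SU u = (\<lambda>w. \<Sum>i\<in>UNIV. pull eta s (\<lambda>a. u a $ i) w * XL eta s (PP i) w)"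

lemma rep_SUterm: "pv u \<Longrightarrow> rep (\<lambda>w. pull eta s (\<lambda>a. u a $ i) w * XL eta s (PP i) w)
   (\<lambda>x. (u (snd x) $ i) * eta ((snd x ** PP i ** adj (snd x)) *v s) (fst x *v s))"
  by (rule rep_mult[OF rep_pull rep_XL[OF PP_so]]) (simp add: pv_def)

end

context lor3 begin

lemma SU_pull:
  assumes z: "(chi, a) \<in> Dom eta s" and u: "pv u" and h: "pf h" and Dh: "(h has_derivative Dh) (at a)"
  shows "br (SU u) (pull eta s h) (chi, a) = Dh (Yv a (pi (u a)) ** a)"
proof -
  note D = Dom_D[OF z]
  have uc: "pf (\<lambda>a. u a $ i)" for i using u by (simp add: pv_def)
  have "br (SU u) (pull eta s h) (chi, a) = (\<Sum>i\<in>UNIV. br (\<lambda>w. pull eta s (\<lambda>a. u a $ i) w * XL eta s (PP i) w) (pull eta s h) (chi, a))"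
    unfolding SU_def by (rule br_sum_l[OF _ rep_SUterm[OF u] rep_smooth[OF rep_pull[OF h]] z]) simp
  also have "\<dots> = (\<Sum>i\<in>UNIV. u a $ i * Dh (Yv a (xb i) ** a))"
  proof (rule sum.cong[OF refl])
    fix i
    show "br (\<lambda>w. pull eta s (\<lambda>a. u a $ i) w * XL eta s (PP i) w) (pull eta s h) (chi, a) = u a $ i * Dh (Yv a (xb i) ** a)"
      using br_prod_pull[OF PP_c uc h z] z PiL_val[OF D(2) xb_perp Dh]
      by (simp add: pull_val PP_def)
  qed
  also have "\<dots> = Dh (Yv a (pi (u a)) ** a)"
    by (rule LE[OF lin_DY[OF bounded_linear.linear[OF has_derivative_bounded_linear[OF Dh]]]])
  finally show ?thesis .
qed

end


context lor3 begin

lemma lin_eta_api: "linear (\<lambda>x. eta (a *v pi x) c)"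
  using linear_compose[OF lin_pi linear_compose[OF matrix_vector_mul_linear lin_l]] by (simp add: o_def)

lemma comp_deriv: "(u has_derivative Du) (at a) \<Longrightarrow> ((\<lambda>a. u a $ j) has_derivative (\<lambda>H. Du H $ j)) (at a)"
  using bounded_linear.has_derivative[OF bounded_linear_vec_nth] by blast

lemma S1: fixes K :: "real^'n \<Rightarrow> real^'n \<Rightarrow> real"
  assumes "bilinear K"
  shows "(\<Sum>i\<in>UNIV. \<Sum>j\<in>UNIV. U $ i * W $ j * K (xb i) (xb j)) = K (pi U) (pi W)"
proof -
  have l1: "linear (\<lambda>x. K x y)" for y using assms by (simp add: bilinear_def)
  have l2: "linear (K x)" for x using assms by (simp add: bilinear_def)
  have "(\<Sum>i\<in>UNIV. \<Sum>j\<in>UNIV. U $ i * W $ j * K (xb i) (xb j)) = (\<Sum>i\<in>UNIV. U $ i * (\<Sum>j\<in>UNIV. W $ j * K (xb i) (xb j)))"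
    by (simp add: sum_distrib_left mult.assoc)
  also have "\<dots> = (\<Sum>i\<in>UNIV. U $ i * K (xb i) (pi W))" by (simp only: LE[OF l2])
  also have "\<dots> = K (pi U) (pi W)" by (rule LE[OF l1])
  finally show ?thesis .
qed

lemma S2: assumes "linear (M :: real^'n \<Rightarrow> real^'n)" "linear (L :: real^'n \<Rightarrow> real)"
  shows "(\<Sum>i\<in>UNIV. \<Sum>j\<in>UNIV. U $ i * L (xb j) * M (xb i) $ j) = L (pi (M (pi U)))"
proof -
  have lj: "linear (\<lambda>x. M x $ j)" for j
    using linear_compose[OF assms(1) bounded_linear.linear[OF bounded_linear_vec_nth]] by (simp add: o_def)
  have lLM: "linear (\<lambda>x. L (pi (M x)))"
    using linear_compose[OF assms(1) linear_compose[OF lin_pi assms(2)]] by (simp add: o_def)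
  have "(\<Sum>i\<in>UNIV. \<Sum>j\<in>UNIV. U $ i * L (xb j) * M (xb i) $ j) = (\<Sum>i\<in>UNIV. U $ i * (\<Sum>j\<in>UNIV. M (xb i) $ j * L (xb j)))"
    by (simp add: sum_distrib_left mult_ac)
  also have "\<dots> = (\<Sum>i\<in>UNIV. U $ i * L (pi (M (xb i))))" by (simp only: LE[OF assms(2)])
  also have "\<dots> = L (pi (M (pi U)))" by (rule LE[OF lLM])
  finally show ?thesis .
qed

lemma S3: assumes "linear (M :: real^'n \<Rightarrow> real^'n)" "linear (L :: real^'n \<Rightarrow> real)"
  shows "(\<Sum>i\<in>UNIV. \<Sum>j\<in>UNIV. W $ j * L (xb i) * M (xb j) $ i) = L (pi (M (pi W)))"
proof -
  have "(\<Sum>i\<in>UNIV. \<Sum>j\<in>UNIV. W $ j * L (xb i) * M (xb j) $ i) = (\<Sum>j\<in>UNIV. \<Sum>i\<in>UNIV. W $ j * L (xb i) * M (xb j) $ i)"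
    by (rule sum.swap)
  also have "\<dots> = L (pi (M (pi W)))" by (rule S2[OF assms])
  finally show ?thesis .
qed

definition KK :: "'n mat \<Rightarrow> real^'n \<Rightarrow> real^'n \<Rightarrow> real^'n \<Rightarrow> real" where
  "KK a c x y = sig a * (eta ff y * eta (a *v x) c - eta ff x * eta (a *v y) c)"

lemma KK_bil: "bilinear (KK a c)"
  unfolding bilinear_def KK_def by (auto intro!: linearI simp: algebra_simps)

lemma SU_SU:
  assumes z: "(chi, a) \<in> Dom eta s" and u: "pv u" and w: "pv w"
    and Du: "(u has_derivative Du) (at a)" and Dw: "(w has_derivative Dw) (at a)"
  defines "c \<equiv> kinv eta chi *v s"
  shows "br (SU u) (SU w) (chi, a) = KK a c (pi (u a)) (pi (w a))
     + sig a * eta (a *v pi (Dw (Yv a (pi (u a)) ** a))) c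
     - sig a * eta (a *v pi (Du (Yv a (pi (w a)) ** a))) c"
proof -
  note D = Dom_D[OF z]
  have uc: "pf (\<lambda>a. u a $ i)" for i using u by (simp add: pv_def)
  have wc: "pf (\<lambda>a. w a $ i)" for i using w by (simp add: pv_def)
  have rw: "rep (SU w) (\<lambda>x. \<Sum>j\<in>UNIV. (w (snd x) $ j) * eta ((snd x ** PP j ** adj (snd x)) *v s) (fst x *v s))"
    unfolding SU_def by (rule rep_sum[OF finite rep_SUterm[OF w]])
  have lDu: "linear Du" using has_derivative_bounded_linear[OF Du] bounded_linear.linear by blast
  have lDw: "linear Dw" using has_derivative_bounded_linear[OF Dw] bounded_linear.linear by blast
  have XLx: "XL eta s (PP i) (chi, a) = sig a * eta (a *v xb i) c" for i
    unfolding PP_def c_def by (rule XL_val[OF z xb_perp])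
  have trm: "br (\<lambda>w'. pull eta s (\<lambda>a. u a $ i) w' * XL eta s (PP i) w') (\<lambda>w'. pull eta s (\<lambda>a. w a $ j) w' * XL eta s (PP j) w') (chi, a)
     = u a $ i * w a $ j * KK a c (xb i) (xb j)
       + u a $ i * (sig a * eta (a *v xb j) c) * Dw (Yv a (xb i) ** a) $ j
       - w a $ j * (sig a * eta (a *v xb i) c) * Du (Yv a (xb j) ** a) $ i" for i j
  proof -
    have lie: "- XL eta s (lie_br (PP j) (PP i)) (chi, a) = KK a c (xb i) (xb j)"
    proof -
      have perp: "eta (eta ff (xb i) *\<^sub>R xb j - eta ff (xb j) *\<^sub>R xb i) s = 0" by (simp add: xb_perp)
      show ?thesis unfolding PP_def lie_Lam XL_val[OF z perp] KK_def c_def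
        by (simp add: algebra_simps)
    qed
    have pi1: "PiL eta s t (PP i) (\<lambda>a. w a $ j) a = Dw (Yv a (xb i) ** a) $ j"
      unfolding PP_def by (rule PiL_val[OF D(2) xb_perp comp_deriv[OF Dw]])
    have pi2: "PiL eta s t (PP j) (\<lambda>a. u a $ i) a = Du (Yv a (xb j) ** a) $ i"
      unfolding PP_def by (rule PiL_val[OF D(2) xb_perp comp_deriv[OF Du]])
    have lie': "XL eta s (lie_br (PP j) (PP i)) (chi, a) = - KK a c (xb i) (xb j)" using lie by simp
    show ?thesis using br_prod[OF PP_c PP_c uc wc z] lie' pi1 pi2 XLx
      by (simp add: pull_val[OF z])
  qed
  have "br (SU u) (SU w) (chi, a) = (\<Sum>i\<in>UNIV. br (\<lambda>w'. pull eta s (\<lambda>a. u a $ i) w' * XL eta s (PP i) w') (SU w) (chi, a))"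
    unfolding SU_def[of u] by (rule br_sum_l[OF _ rep_SUterm[OF u] rep_smooth[OF rw] z]) simp
  also have "\<dots> = (\<Sum>i\<in>UNIV. \<Sum>j\<in>UNIV. br (\<lambda>w'. pull eta s (\<lambda>a. u a $ i) w' * XL eta s (PP i) w') (\<lambda>w'. pull eta s (\<lambda>a. w a $ j) w' * XL eta s (PP j) w') (chi, a))"
    unfolding SU_def[of w] by (rule sum.cong[OF refl], rule br_sum_r[OF _ rep_SUterm[OF w] rep_SUterm[OF u] z]) simp
  also have "\<dots> = (\<Sum>i\<in>UNIV. \<Sum>j\<in>UNIV. u a $ i * w a $ j * KK a c (xb i) (xb j))
      + (\<Sum>i\<in>UNIV. \<Sum>j\<in>UNIV. u a $ i * (sig a * eta (a *v xb j) c) * Dw (Yv a (xb i) ** a) $ j)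
      - (\<Sum>i\<in>UNIV. \<Sum>j\<in>UNIV. w a $ j * (sig a * eta (a *v xb i) c) * Du (Yv a (xb j) ** a) $ i)"
    by (simp only: trm sum.distrib sum_subtractf)
  also have "(\<Sum>i\<in>UNIV. \<Sum>j\<in>UNIV. u a $ i * w a $ j * KK a c (xb i) (xb j)) = KK a c (pi (u a)) (pi (w a))"
    by (rule S1[OF KK_bil])
  also have "(\<Sum>i\<in>UNIV. \<Sum>j\<in>UNIV. u a $ i * (sig a * eta (a *v xb j) c) * Dw (Yv a (xb i) ** a) $ j)
      = sig a * eta (a *v pi (Dw (Yv a (pi (u a)) ** a))) c"
    by (rule S2[OF lin_DY[OF lDw]]) (rule linearI, simp_all add: algebra_simps)
  also have "(\<Sum>i\<in>UNIV. \<Sum>j\<in>UNIV. w a $ j * (sig a * eta (a *v xb i) c) * Du (Yv a (xb j) ** a) $ i)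
      = sig a * eta (a *v pi (Du (Yv a (pi (w a)) ** a))) c"
    by (rule S3[OF lin_DY[OF lDu]]) (rule linearI, simp_all add: algebra_simps)
  finally show ?thesis .
qed

end


context lor3 begin

definition vv :: "'n dual \<Rightarrow> real^'n" where "vv phi = kinv eta phi *v s"
definition uf :: "real^'n \<Rightarrow> 'n mat \<Rightarrow> real^'n" where "uf v = (\<lambda>a. sig a *\<^sub>R (adj a *v v))"
definition gf :: "real^'n \<Rightarrow> real^'n \<Rightarrow> 'n mat \<Rightarrow> real" where "gf p q = (\<lambda>a. sig a * eta (a *v q) p)"

lemma bl_of_lin: "linear (f :: 'n mat \<Rightarrow> 'b::real_normed_vector) \<Longrightarrow> bounded_linear f"
  by (simp add: linear_conv_bounded_linear)

lemma lin_sig: "linear sig" unfolding sig_def by (rule linearI) simp_all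
lemma lin_adjv: "linear (\<lambda>a. adj a *v v)" by (rule linearI) (simp_all add: adj_add adj_scale)

lemma sig_deriv: "(sig has_derivative sig) (at a)"
  using bounded_linear.has_derivative[OF bl_of_lin[OF lin_sig] has_derivative_ident] by simp
lemma adjv_deriv: "((\<lambda>a. adj a *v v) has_derivative (\<lambda>h. adj h *v v)) (at a)"
  using bounded_linear.has_derivative[OF bl_of_lin[OF lin_adjv] has_derivative_ident] by simp
lemma uf_deriv: "(uf v has_derivative (\<lambda>h. sig a *\<^sub>R (adj h *v v) + sig h *\<^sub>R (adj a *v v))) (at a)"
  unfolding uf_def using has_derivative_scaleR[OF sig_deriv adjv_deriv] by simp

lemma gf_deriv: "(gf p q has_derivative (\<lambda>h. sig a * eta (h *v q) p + sig h * eta (a *v q) p)) (at a)"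
proof -
  have "linear (\<lambda>a::'n mat. eta (a *v q) p)" by (rule linearI) simp_all
  then have bl: "bounded_linear (\<lambda>a::'n mat. eta (a *v q) p)" by (rule bl_of_lin)
  have d: "((\<lambda>a. eta (a *v q) p) has_derivative (\<lambda>h. eta (h *v q) p)) (at a)"
    using bounded_linear.has_derivative[OF bl has_derivative_ident] by simp
  show ?thesis unfolding gf_def using has_derivative_mult[OF sig_deriv d] by simp
qed

lemma pm_id: "pm (\<lambda>a::'n mat. a)" by (rule pm_lin) (rule bounded_linear_ident)
lemma pf_sig: "pf sig"
proof -
  have "pf (\<lambda>a. eta (a *v s) s)" by (rule pf_bil_pv[OF bil pv_mv[OF pm_id pv_const] pv_const])
  then show ?thesis unfolding sig_def by (rule pf_neg)
qed
lemma pv_uf: "pv (uf v)"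
  unfolding uf_def by (rule pv_scale[OF pf_sig pv_mv[OF pm_adj[OF pm_id] pv_const]])
lemma pf_gf: "pf (gf p q)"
  unfolding gf_def by (rule pf_mult[OF pf_sig pf_bil_pv[OF bil pv_mv[OF pm_id pv_const] pv_const]])

lemma pull_out: "z \<notin> Dom eta s \<Longrightarrow> pull eta s f z = 0" by (cases z) (simp add: pull_def)

lemma ktil_ann: assumes "phi \<in> ann eta s" "psi \<in> ann eta s"
  shows "ktil eta phi psi = eta (vv psi) (vv phi)"
  unfolding ktil_def vv_def by (rule ann_k[OF assms(1) ann_D(1)[OF assms(2)]])

lemma vv_perp: "phi \<in> ann eta s \<Longrightarrow> eta (vv phi) s = 0"
  unfolding vv_def by (rule ann_perp)

lemma pi_a_adj: assumes a: "a \<in> A_grp eta s" shows "a *v pi (adj a *v y) = pi y"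
proof -
  have O: "a \<in> O_grp eta" by (rule A_O[OF a])
  have "eta (adj a *v y) s = sig a * eta y s" using adj_eq[of a y s] A_sig(1)[OF a] by simp
  then show ?thesis using A_sig[OF a] by (simp add: pi_def O_adj_apply2[OF O])
qed

lemma uf_perp: assumes a: "a \<in> A_grp eta s" and v: "eta v s = 0" shows "eta (uf v a) s = 0"
  using adj_eq[of a v s] A_sig(1)[OF a] v by (simp add: uf_def)

lemma a_uf: assumes a: "a \<in> A_grp eta s" shows "a *v uf v a = sig a *\<^sub>R v"
  using O_adj_apply2[OF A_O[OF a]] by (simp add: uf_def)

lemma kt1_SU: assumes phi: "phi \<in> ann eta s" shows "kt1 eta s phi = SU (uf (vv phi))"
proof
  fix zz :: "'n pt"
  show "kt1 eta s phi zz = SU (uf (vv phi)) zz"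
  proof (cases "zz \<in> Dom eta s")
    case False then show ?thesis by (cases zz) (simp add: kt1_def SU_def pull_out)
  next
    case True
    obtain chi a where zz: "zz = (chi, a)" by (cases zz)
    have z: "(chi, a) \<in> Dom eta s" using True zz by simp
    note D = Dom_D[OF z]
    define c where "c = kinv eta chi *v s"
    have "SU (uf (vv phi)) (chi, a) = (\<Sum>i\<in>UNIV. uf (vv phi) a $ i * (sig a * eta (a *v xb i) c))"
      unfolding SU_def c_def by (simp add: pull_val[OF z] PP_def XL_val[OF z xb_perp])
    also have "\<dots> = sig a * eta (a *v pi (uf (vv phi) a)) c"
      by (rule LE) (rule linearI, simp_all add: algebra_simps)
    also have "\<dots> = eta (vv phi) c"
      using pi_id[OF uf_perp[OF D(2) vv_perp[OF phi]]] a_uf[OF D(2)] A_sig(2)[OF D(2)]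
      by (simp add: mult.assoc[symmetric])
    also have "\<dots> = ktil eta phi chi"
      using ktil_ann[OF phi D(1)] esym by (simp add: c_def vv_def)
    finally show ?thesis using zz z by (simp add: kt1_def)
  qed
qed

lemma theta_ann: "kdual eta (Lam eta t s) \<in> ann eta s"
  unfolding ann_def gdual_def
proof (intro CollectI conjI ballI allI impI)
  fix X Y assume "X \<in> so_alg eta" "Y \<in> so_alg eta"
  then show "kdual eta (Lam eta t s) (X + Y) = kdual eta (Lam eta t s) X + kdual eta (Lam eta t s) Y"
    by (simp add: kdual_def so_add)
next
  fix c X assume "X \<in> so_alg eta"
  then show "kdual eta (Lam eta t s) (c *\<^sub>R X) = c * kdual eta (Lam eta t s) X"
    by (simp add: kdual_def so_scale)
next
  fix X assume "X \<notin> so_alg eta" then show "kdual eta (Lam eta t s) X = 0" by (simp add: kdual_def)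
next
  fix Y assume "Y \<in> a_alg eta s"
  then show "kdual eta (Lam eta t s) Y = 0" using theta_perp by (simp add: kdual_def a_alg_mem)
qed

lemma vv_theta: "vv (kdual eta (Lam eta t s)) = - t"
  unfolding vv_def theta_inv by (rule theta_s)

lemma kt2_pull: assumes phi: "phi \<in> ann eta s" and psi: "psi \<in> ann eta s"
  shows "kt2 eta s phi psi = pull eta s (gf (vv phi) (vv psi))"
proof
  fix zz :: "'n pt"
  show "kt2 eta s phi psi zz = pull eta s (gf (vv phi) (vv psi)) zz"
  proof (cases "zz \<in> Dom eta s")
    case False then show ?thesis by (cases zz) (simp add: kt2_def pull_out)
  next
    case True
    obtain chi a where zz: "zz = (chi, a)" by (cases zz)
    have z: "(chi, a) \<in> Dom eta s" using True zz by simp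
    note D = Dom_D[OF z]
    have Pso: "kinv eta psi \<in> so_alg eta" by (rule ann_D(1)[OF psi])
    have "ktil eta phi (adsharp eta a psi) = kform eta (kinv eta phi) (ad a (kinv eta psi))"
      unfolding ktil_def kinv_adsharp[OF D(3) ann_D(3)[OF psi]] ..
    also have "\<dots> = eta (ad a (kinv eta psi) *v s) (vv phi)"
      unfolding vv_def by (rule ann_k[OF phi ad_so[OF D(3) Pso]])
    also have "ad a (kinv eta psi) *v s = sig a *\<^sub>R (a *v vv psi)"
      by (simp add: ad_O[OF D(3)] A_adj_s[OF D(2)] vv_def)
    finally show ?thesis using zz z by (simp add: kt2_def pull_val gf_def)
  qed
qed

lemma Yv_s: assumes a: "a \<in> A_grp eta s" and x: "eta x s = 0" shows "Yv a x *v s = 0"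
  using A_eta_s[OF a, of ff] A_eta_s[OF a, of x] x by (simp add: Yv_def Lam_apply ss ts)

lemma Yv_so: "Yv a x \<in> so_alg eta" unfolding Yv_def by (rule so_diff[OF Lam_so Lam_so])

lemma sig_Ya: assumes a: "a \<in> A_grp eta s" and x: "eta x s = 0" shows "sig (Yv a x ** a) = 0"
proof -
  have "(Yv a x ** a) *v s = sig a *\<^sub>R (Yv a x *v s)" using A_sig(1)[OF a] by simp
  then show ?thesis using Yv_s[OF a x] by (simp add: sig_def)
qed

lemma Du_Ya: assumes a: "a \<in> A_grp eta s" and x: "eta x s = 0"
  shows "sig a *\<^sub>R (adj (Yv a x ** a) *v v) + sig (Yv a x ** a) *\<^sub>R (adj a *v v)
     = - (sig a *\<^sub>R (adj a *v (Yv a x *v v)))"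
  using sig_Ya[OF a x] by (simp add: adj_mul adj_so[OF Yv_so])

lemma term_eval: assumes a: "a \<in> A_grp eta s" and x: "eta x s = 0" and c: "eta s c = 0"
  shows "sig a * eta (a *v pi (sig a *\<^sub>R (adj (Yv a x ** a) *v v) + sig (Yv a x ** a) *\<^sub>R (adj a *v v))) c
     = - eta (Yv a x *v v) c"
proof -
  have lpi: "pi (- (sig a *\<^sub>R y)) = - (sig a *\<^sub>R pi y)" for y
    using linear_neg[OF lin_pi] linear_scale[OF lin_pi] by simp
  have "sig a * eta (a *v pi (- (sig a *\<^sub>R (adj a *v (Yv a x *v v))))) c
      = - (sig a * sig a) * eta (a *v pi (adj a *v (Yv a x *v v))) c"
    by (simp add: lpi)
  also have "\<dots> = - eta (pi (Yv a x *v v)) c" using A_sig(2)[OF a] pi_a_adj[OF a] by simp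
  also have "\<dots> = - eta (Yv a x *v v) c" using c by (simp add: pi_def)
  finally show ?thesis unfolding Du_Ya[OF a x] .
qed

end


context lor3 begin

lemma Yv_eval: assumes a: "a \<in> A_grp eta s" and aU: "a *v U = sig a *\<^sub>R v"
  shows "eta (Yv a U *v y) w = sig a * eta (a *v ff) y * eta v w - sig a * eta v y * eta (a *v ff) w
     - eta ff y * eta v w + eta v y * eta ff w"
proof -
  have ss1: "sig a * sig a = 1" by (rule A_sig(2)[OF a])
  have e: "Yv a U *v y = (sig a * eta (a *v ff) y) *\<^sub>R v - (sig a * eta v y) *\<^sub>R (a *v ff)
      - ((sig a * sig a) * eta ff y) *\<^sub>R v + ((sig a * sig a) * eta v y) *\<^sub>R ff"
    unfolding Yv_def aU by (simp add: Lam_apply algebra_simps esym[of "a *v t"] esym[of "a *v s"])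
  show ?thesis unfolding e ss1 by (simp add: algebra_simps)
qed

lemma sig_cases: assumes a: "a \<in> A_grp eta s" shows "sig a = 1 \<or> sig a = -1"
proof -
  have "sig a * sig a = 1" by (rule A_sig(2)[OF a])
  then have "(sig a - 1) * (sig a + 1) = 0" by (simp add: algebra_simps)
  then show ?thesis by auto
qed

lemma main2:
  assumes z: "(chi, a) \<in> Dom eta s" and lam: "lam \<in> ann eta s" and phi: "phi \<in> ann eta s"
    and psi: "psi \<in> ann eta s"
  defines "theta \<equiv> kdual eta (Lam eta t s)"
  shows "br (kt1 eta s lam) (kt2 eta s phi psi) (chi, a) =
           kt2 eta s lam psi (chi, a) * (kt2 eta s phi theta (chi, a) - ktil eta theta phi)
           + ktil eta lam phi * (kt2 eta s theta psi (chi, a) - ktil eta theta psi)"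
proof -
  note D = Dom_D[OF z]
  have th: "theta \<in> ann eta s" unfolding theta_def by (rule theta_ann)
  have vth: "vv theta = - t" unfolding theta_def by (rule vv_theta)
  define vl where "vl = vv lam"
  define vp where "vp = vv phi"
  define vq where "vq = vv psi"
  define U where "U = uf vl a"
  have pl: "eta vl s = 0" "eta vp s = 0" "eta vq s = 0"
    unfolding vl_def vp_def vq_def using vv_perp lam phi psi by auto
  have Up: "eta U s = 0" unfolding U_def by (rule uf_perp[OF D(2) pl(1)])
  have aU: "a *v U = sig a *\<^sub>R vl" unfolding U_def by (rule a_uf[OF D(2)])
  have "br (kt1 eta s lam) (kt2 eta s phi psi) (chi, a) = br (SU (uf vl)) (pull eta s (gf vp vq)) (chi, a)"
    unfolding kt1_SU[OF lam] kt2_pull[OF phi psi] vl_def vp_def vq_def ..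
  also have "\<dots> = sig a * eta ((Yv a U ** a) *v vq) vp + sig (Yv a U ** a) * eta (a *v vq) vp"
    using SU_pull[OF z pv_uf pf_gf gf_deriv] pi_id[OF Up] by (simp add: U_def)
  also have "\<dots> = sig a * eta (Yv a U *v (a *v vq)) vp" using sig_Ya[OF D(2) Up] by simp
  also have "\<dots> = sig a * (sig a * eta (a *v ff) (a *v vq) * eta vl vp - sig a * eta vl (a *v vq) * eta (a *v ff) vp
     - eta ff (a *v vq) * eta vl vp + eta vl (a *v vq) * eta ff vp)"
    by (simp only: Yv_eval[OF D(2) aU])
  finally have L: "br (kt1 eta s lam) (kt2 eta s phi psi) (chi, a) = sig a * (sig a * eta (a *v ff) (a *v vq) * eta vl vp - sig a * eta vl (a *v vq) * eta (a *v ff) vp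
     - eta ff (a *v vq) * eta vl vp + eta vl (a *v vq) * eta ff vp)" .
  have R1: "kt2 eta s lam psi (chi, a) = sig a * eta (a *v vq) vl"
    unfolding kt2_pull[OF lam psi] by (simp add: pull_val[OF z] gf_def vl_def vq_def)
  have R2: "kt2 eta s phi theta (chi, a) = - sig a * eta (a *v t) vp"
    unfolding kt2_pull[OF phi th] by (simp add: pull_val[OF z] gf_def vp_def vth)
  have R3: "kt2 eta s theta psi (chi, a) = - sig a * eta (a *v vq) t"
    unfolding kt2_pull[OF th psi] by (simp add: pull_val[OF z] gf_def vq_def vth)
  have R4: "ktil eta theta phi = - eta vp t" by (simp add: ktil_ann[OF th phi] vth vp_def)
  have R5: "ktil eta theta psi = - eta vq t" by (simp add: ktil_ann[OF th psi] vth vq_def)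
  have R6: "ktil eta lam phi = eta vp vl" by (simp add: ktil_ann[OF lam phi] vp_def vl_def)
  have O: "eta (a *v x) (a *v y) = eta x y" for x y using D(3) by (simp add: O_def2)
  have as: "a *v s = sig a *\<^sub>R s" by (rule A_sig(1)[OF D(2)])
  have saq: "eta s (a *v vq) = 0" using A_eta_s[OF D(2), of vq] pl(3) esym[of s "a *v vq"] by simp
  have sps: "eta s vp = 0" "eta s vq = 0" "eta s vl = 0" using pl esym by auto
  show ?thesis unfolding L R1 R2 R3 R4 R5 R6
    using sig_cases[OF D(2)]
    by (auto simp: O as saq sps algebra_simps esym[of "a *v vq" vl] esym[of vp t] esym[of vq t]
        esym[of "a *v vq" t] esym[of vp vl])
qed

lemma main3:
  assumes z: "(chi, a) \<in> Dom eta s" and lam: "lam \<in> ann eta s" and phi: "phi \<in> ann eta s"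
    and psi: "psi \<in> ann eta s" and mu: "mu \<in> ann eta s"
  shows "br (kt2 eta s phi lam) (kt2 eta s psi mu) (chi, a) = 0"
  unfolding kt2_pull[OF phi lam] kt2_pull[OF psi mu]
  by (rule br_ff[OF smooth_A_pf[OF pf_gf] smooth_A_pf[OF pf_gf] z])

lemma main1:
  assumes z: "(chi, a) \<in> Dom eta s" and phi: "phi \<in> ann eta s" and psi: "psi \<in> ann eta s"
  defines "theta \<equiv> kdual eta (Lam eta t s)"
  shows "br (kt1 eta s phi) (kt1 eta s psi) (chi, a) =
           ktil eta theta phi * kt1 eta s psi (chi, a) - ktil eta theta psi * kt1 eta s phi (chi, a)"
proof -
  note D = Dom_D[OF z]
  have th: "theta \<in> ann eta s" unfolding theta_def by (rule theta_ann)
  have vth: "vv theta = - t" unfolding theta_def by (rule vv_theta)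
  define vp where "vp = vv phi"
  define vq where "vq = vv psi"
  define c where "c = vv chi"
  define U where "U = uf vp a"
  define W where "W = uf vq a"
  have pl: "eta vp s = 0" "eta vq s = 0" "eta c s = 0"
    unfolding vp_def vq_def c_def using vv_perp phi psi D(1) by auto
  have cs: "eta s c = 0" using pl(3) esym[of s c] by simp
  have Up: "eta U s = 0" unfolding U_def by (rule uf_perp[OF D(2) pl(1)])
  have Wp: "eta W s = 0" unfolding W_def by (rule uf_perp[OF D(2) pl(2)])
  have aU: "a *v U = sig a *\<^sub>R vp" unfolding U_def by (rule a_uf[OF D(2)])
  have aW: "a *v W = sig a *\<^sub>R vq" unfolding W_def by (rule a_uf[OF D(2)])
  have "br (kt1 eta s phi) (kt1 eta s psi) (chi, a) = br (SU (uf vp)) (SU (uf vq)) (chi, a)"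
    unfolding kt1_SU[OF phi] kt1_SU[OF psi] vp_def vq_def ..
  also have "\<dots> = KK a c U W
     + sig a * eta (a *v pi (sig a *\<^sub>R (adj (Yv a U ** a) *v vq) + sig (Yv a U ** a) *\<^sub>R (adj a *v vq))) c
     - sig a * eta (a *v pi (sig a *\<^sub>R (adj (Yv a W ** a) *v vp) + sig (Yv a W ** a) *\<^sub>R (adj a *v vp))) c"
    using SU_SU[OF z pv_uf pv_uf uf_deriv uf_deriv] pi_id[OF Up] pi_id[OF Wp]
    by (simp add: U_def W_def c_def vv_def)
  also have "\<dots> = KK a c U W - eta (Yv a U *v vq) c + eta (Yv a W *v vp) c"
    by (simp only: term_eval[OF D(2) Up cs] term_eval[OF D(2) Wp cs])
  also have "\<dots> = KK a c U W
     - (sig a * eta (a *v ff) vq * eta vp c - sig a * eta vp vq * eta (a *v ff) c - eta ff vq * eta vp c + eta vp vq * eta ff c)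
     + (sig a * eta (a *v ff) vp * eta vq c - sig a * eta vq vp * eta (a *v ff) c - eta ff vp * eta vq c + eta vq vp * eta ff c)"
    by (simp only: Yv_eval[OF D(2) aU] Yv_eval[OF D(2) aW])
  finally have L: "br (kt1 eta s phi) (kt1 eta s psi) (chi, a) = KK a c U W
     - (sig a * eta (a *v ff) vq * eta vp c - sig a * eta vp vq * eta (a *v ff) c - eta ff vq * eta vp c + eta vp vq * eta ff c)
     + (sig a * eta (a *v ff) vp * eta vq c - sig a * eta vq vp * eta (a *v ff) c - eta ff vp * eta vq c + eta vq vp * eta ff c)" .
  have ffW: "eta ff W = sig a * eta (a *v ff) vq"
    unfolding W_def uf_def by (simp only: eta_scale_r adj_eq2)
  have ffU: "eta ff U = sig a * eta (a *v ff) vp"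
    unfolding U_def uf_def by (simp only: eta_scale_r adj_eq2)
  have K: "KK a c U W = sig a * (eta ff W * eta (a *v U) c - eta ff U * eta (a *v W) c)"
    by (simp add: KK_def)
  have R1: "kt1 eta s psi (chi, a) = eta c vq" using z by (simp add: kt1_def ktil_ann[OF psi D(1)] c_def vq_def)
  have R2: "kt1 eta s phi (chi, a) = eta c vp" using z by (simp add: kt1_def ktil_ann[OF phi D(1)] c_def vp_def)
  have R4: "ktil eta theta phi = - eta vp t" by (simp add: ktil_ann[OF th phi] vth vp_def)
  have R5: "ktil eta theta psi = - eta vq t" by (simp add: ktil_ann[OF th psi] vth vq_def)
  have as: "a *v s = sig a *\<^sub>R s" by (rule A_sig(1)[OF D(2)])
  have sps: "eta s vp = 0" "eta s vq = 0" using pl esym by auto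
  have ss1: "sig a * sig a = 1" by (rule A_sig(2)[OF D(2)])
  have K2: "KK a c U W = sig a * (eta (a *v ff) vq * eta vp c - eta (a *v ff) vp * eta vq c)"
    unfolding K ffW ffU aU aW using sig_cases[OF D(2)] by (auto simp: algebra_simps)
  show ?thesis unfolding L K2 R1 R2 R4 R5
    using sig_cases[OF D(2)]
    by (auto simp: as sps cs algebra_simps esym[of c vq] esym[of c vp] esym[of vp t] esym[of vq t] esym[of vq vp])
qed

end


theorem mainTheorem1:
  fixes eta :: "real^'n::finite \<Rightarrow> real^'n \<Rightarrow> real"
    and s t :: "real^'n"
    and phi psi lam mu :: "'n dual" and z :: "'n pt"
    and br :: "('n pt \<Rightarrow> real) \<Rightarrow> ('n pt \<Rightarrow> real) \<Rightarrow> 'n pt \<Rightarrow> real"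
  assumes dim: "CARD('n) > 3"
    and eta: "lorentz_form eta"
    and ss: "eta s s = -1" and tt: "eta t t = 1" and st: "eta s t = 0"
    and br: "is_poisson_bracket eta s t br"
    and phi: "phi \<in> ann eta s" and psi: "psi \<in> ann eta s"
    and lam: "lam \<in> ann eta s" and mu: "mu \<in> ann eta s"
    and z: "z \<in> Dom eta s"
  defines "theta \<equiv> kdual eta (Lam eta t s)"
  shows "(br (kt1 eta s phi) (kt1 eta s psi) z =
           ktil eta theta phi * kt1 eta s psi z - ktil eta theta psi * kt1 eta s phi z) \<and>
         (br (kt1 eta s lam) (kt2 eta s phi psi) z =
           kt2 eta s lam psi z * (kt2 eta s phi theta z - ktil eta theta phi)
           + ktil eta lam phi * (kt2 eta s theta psi z - ktil eta theta psi)) \<and>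
         br (kt2 eta s phi lam) (kt2 eta s psi mu) z = 0"
proof -
  obtain bb :: "'n \<Rightarrow> real^'n" and i0 where
    bil: "bilinear eta" and sym: "\<And>x y. eta x y = eta y x" and
    bb: "\<And>i j. eta (bb i) (bb j) = (if i = j then (if i = i0 then 1 else -1) else 0)"
    using eta unfolding lorentz_form_def by blast
  interpret L: lor3 eta bb s t br
  proof unfold_locales
    show "bilinear eta" by (rule bil)
    show "\<And>x y. eta x y = eta y x" by (rule sym)
    show "\<And>i j. i \<noteq> j \<Longrightarrow> eta (bb i) (bb j) = 0" using bb by simp
    show "\<And>i. eta (bb i) (bb i) = 1 \<or> eta (bb i) (bb i) = -1" using bb by simp
    show "eta s s = -1" "eta t t = 1" "eta s t = 0" by (rule ss, rule tt, rule st)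
    show "is_poisson_bracket eta s t br" by (rule br)
  qed
  obtain chi a where za: "z = (chi, a)" by (cases z)
  have zD: "(chi, a) \<in> Dom eta s" using z za by simp
  show ?thesis unfolding za theta_def
    using L.main1[OF zD phi psi] L.main2[OF zD lam phi psi] L.main3[OF zD lam phi psi mu] by simp
qed


end
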